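(* Let $K$ be as in the context and let $F=a_1x_1^4+\cdots+a_{11}x_{11}^4$ with all $a_i\in K\setminus\{0\}$. If $F$ is of type $(7,0,0,1)$, then $F$ has a nontrivial zero in $K^{11}$.
   Context: $K$ is one of $\mathbb{Q}_2(\sqrt2),\mathbb{Q}_2(\sqrt{10}),\mathbb{Q}_2(\sqrt{-2}),\mathbb{Q}_2(\sqrt{-10})$, with uniformizer $\pi$ and valuation $v_\pi$. The level of the variable $x_i$ is $v_\pi(a_i)$, considered modulo $4$. For nonnegative integers $s_0,s_1,s_2,s_3$, the form is said to be of type $(s_0,s_1,s_2,s_3)$ if there exists $j\in\mathbb{Z}/4$ such that for each $i\in\{0,1,2,3\}$ the number of variables whose level is congruent to $i+j$ modulo $4$ is at least $s_i$ (so types differing by a cyclic permutation of the entries are the same type). *)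

theory Defs
  imports Main
begin

text \<open>An element of Z_2 is represented by the sequence of its residues
  x n in [0, 2^n) modulo 2^n, which are coherent: x (n+1) mod 2^n = x n.\<close>

type_synonym z2 = "nat \<Rightarrow> int"

definition Z2 :: "z2 set" where
  "Z2 = {x. \<forall>n. 0 \<le> x n \<and> x n < 2 ^ n \<and> x (Suc n) mod 2 ^ n = x n}"

definition z2_of_int :: "int \<Rightarrow> z2" where
  "z2_of_int c = (\<lambda>n. c mod 2 ^ n)"

definition z2_zero :: z2 where
  "z2_zero = z2_of_int 0"

definition z2_add :: "z2 \<Rightarrow> z2 \<Rightarrow> z2" where
  "z2_add x y = (\<lambda>n. (x n + y n) mod 2 ^ n)"

definition z2_mul :: "z2 \<Rightarrow> z2 \<Rightarrow> z2" where
  "z2_mul x y = (\<lambda>n. (x n * y n) mod 2 ^ n)"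

text \<open>2-adic valuation of a nonzero element of Z_2 (largest j with x j = 0).\<close>
definition z2_val :: "z2 \<Rightarrow> nat" where
  "z2_val x = (LEAST n. x (Suc n) \<noteq> 0)"

text \<open>Division by 2^j (meaningful when 2^j divides x, i.e. x j = 0).\<close>
definition z2_shift :: "nat \<Rightarrow> z2 \<Rightarrow> z2" where
  "z2_shift j x = (\<lambda>n. x (n + j) div 2 ^ j)"

text \<open>An element of Q_2 is a pair (k, z) standing for z / 2^k, with z in Z_2,
  in normal form: k = 0 or z is a unit (odd).\<close>

type_synonym q2 = "nat \<times> z2"

definition Q2 :: "q2 set" where
  "Q2 = {(k, z). z \<in> Z2 \<and> (k = 0 \<or> odd (z 1))}"

definition q2_norm :: "nat \<Rightarrow> z2 \<Rightarrow> q2" where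
  "q2_norm k z = (if z = z2_zero then (0, z2_zero)
                  else (let j = min k (z2_val z) in (k - j, z2_shift j z)))"

definition q2_zero :: q2 where
  "q2_zero = (0, z2_zero)"

definition q2_of_int :: "int \<Rightarrow> q2" where
  "q2_of_int c = (0, z2_of_int c)"

definition q2_add :: "q2 \<Rightarrow> q2 \<Rightarrow> q2" where
  "q2_add x y = (case x of (k, z) \<Rightarrow> case y of (l, w) \<Rightarrow>
     q2_norm (k + l) (z2_add (z2_mul (z2_of_int (2 ^ l)) z) (z2_mul (z2_of_int (2 ^ k)) w)))"

definition q2_mul :: "q2 \<Rightarrow> q2 \<Rightarrow> q2" where
  "q2_mul x y = (case x of (k, z) \<Rightarrow> case y of (l, w) \<Rightarrow> q2_norm (k + l) (z2_mul z w))"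

definition q2_val :: "q2 \<Rightarrow> int" where
  "q2_val x = (case x of (k, z) \<Rightarrow> int (z2_val z) - int k)"

text \<open>An element (p, q) stands for p + q * sqrt d.\<close>

type_synonym qk = "q2 \<times> q2"

definition Kset :: "qk set" where
  "Kset = Q2 \<times> Q2"

definition K_zero :: qk where
  "K_zero = (q2_zero, q2_zero)"

definition K_add :: "qk \<Rightarrow> qk \<Rightarrow> qk" where
  "K_add x y = (case x of (p, q) \<Rightarrow> case y of (r, s) \<Rightarrow> (q2_add p r, q2_add q s))"

definition K_mul :: "int \<Rightarrow> qk \<Rightarrow> qk \<Rightarrow> qk" where
  "K_mul d x y = (case x of (p, q) \<Rightarrow> case y of (r, s) \<Rightarrow>
     (q2_add (q2_mul p r) (q2_mul (q2_of_int d) (q2_mul q s)),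
      q2_add (q2_mul p s) (q2_mul q r)))"

fun K_pow :: "int \<Rightarrow> qk \<Rightarrow> nat \<Rightarrow> qk" where
  "K_pow d x 0 = (q2_of_int 1, q2_zero)"
| "K_pow d x (Suc n) = K_mul d x (K_pow d x n)"

definition K_sum :: "(nat \<Rightarrow> qk) \<Rightarrow> nat list \<Rightarrow> qk" where
  "K_sum f is = foldr (\<lambda>i acc. K_add (f i) acc) is K_zero"

text \<open>Normalized valuation v_pi of a nonzero element of K, for the uniformizer
  pi = sqrt d (d in {2,10,-2,-10}, so K/Q_2 is ramified, v_pi(2) = 2, v_pi(sqrt d) = 1):
  v_pi(p + q sqrt d) = min(2 v_2(p), 2 v_2(q) + 1).\<close>
definition K_val :: "qk \<Rightarrow> int" where
  "K_val x = (case x of (p, q) \<Rightarrow>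
     if p = q2_zero then 2 * q2_val q + 1
     else if q = q2_zero then 2 * q2_val p
     else min (2 * q2_val p) (2 * q2_val q + 1))"

definition level :: "(nat \<Rightarrow> qk) \<Rightarrow> nat \<Rightarrow> int" where
  "level a i = K_val (a i) mod 4"

definition of_type :: "(nat \<Rightarrow> qk) \<Rightarrow> nat set \<Rightarrow> (nat \<Rightarrow> nat) \<Rightarrow> bool" where
  "of_type a I s = (\<exists>j::int. \<forall>i<4.
     card {m \<in> I. level a m = (int i + j) mod 4} \<ge> s i)"

end

theory Submission
  imports Defs "HOL-Library.Product_Plus"
begin


type_synonym zp = "int \<times> int"

definition pm :: "int \<Rightarrow> zp \<Rightarrow> zp \<Rightarrow> zp" where
  "pm d x y = (fst x * fst y + d * snd x * snd y, fst x * snd y + snd x * fst y)"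

fun pw :: "int \<Rightarrow> zp \<Rightarrow> nat \<Rightarrow> zp" where
  "pw d x 0 = (1, 0)"
| "pw d x (Suc n) = pm d x (pw d x n)"

definition pdv :: "nat \<Rightarrow> zp \<Rightarrow> bool" where
  "pdv m x \<longleftrightarrow> 2 ^ ((m + 1) div 2) dvd fst x \<and> 2 ^ (m div 2) dvd snd x"

definition pex :: "nat \<Rightarrow> zp \<Rightarrow> bool" where
  "pex m x \<longleftrightarrow> pdv m x \<and> \<not> pdv (Suc m) x"

definition pu :: "zp \<Rightarrow> bool" where "pu x \<longleftrightarrow> odd (fst x)"

lemma fst_pm[simp]: "fst (pm d x y) = fst x * fst y + d * snd x * snd y" by (simp add: pm_def)
lemma snd_pm[simp]: "snd (pm d x y) = fst x * snd y + snd x * fst y" by (simp add: pm_def)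

lemma pm_eqI: "fst a = fst b \<Longrightarrow> snd a = snd b \<Longrightarrow> a = b" by (simp add: prod_eq_iff)

lemma pm_comm: "pm d x y = pm d y x" by (rule pm_eqI) (simp_all add: algebra_simps)
lemma pm_assoc: "pm d (pm d x y) z = pm d x (pm d y z)" by (rule pm_eqI) (simp_all add: algebra_simps)
lemma pm_add_right: "pm d x (y + z) = pm d x y + pm d x z" by (rule pm_eqI) (simp_all add: algebra_simps)
lemma pm_add_left: "pm d (y + z) x = pm d y x + pm d z x" by (rule pm_eqI) (simp_all add: algebra_simps)
lemma pm_diff_right: "pm d x (y - z) = pm d x y - pm d x z" by (rule pm_eqI) (simp_all add: algebra_simps)
lemma pm_diff_left: "pm d (y - z) x = pm d y x - pm d z x" by (rule pm_eqI) (simp_all add: algebra_simps)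
lemma pm_minus_right: "pm d x (- y) = - pm d x y" by (rule pm_eqI) (simp_all add: algebra_simps)
lemma pm_minus_left: "pm d (- y) x = - pm d y x" by (rule pm_eqI) (simp_all add: algebra_simps)
lemma pm_one_right[simp]: "pm d x (1, 0) = x" by (rule pm_eqI) simp_all
lemma pm_one_left[simp]: "pm d (1, 0) x = x" by (rule pm_eqI) simp_all
lemma pm_zero_right[simp]: "pm d x 0 = 0" by (rule pm_eqI) simp_all
lemma pm_zero_left[simp]: "pm d 0 x = 0" by (rule pm_eqI) simp_all
lemma pm_sum_right: "pm d x (\<Sum>i\<in>A. f i) = (\<Sum>i\<in>A. pm d x (f i))"
  by (rule pm_eqI) (simp_all add: fst_sum snd_sum sum_distrib_left sum.distrib algebra_simps)
lemma pm_sum_left: "pm d (\<Sum>i\<in>A. f i) x = (\<Sum>i\<in>A. pm d (f i) x)"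
  by (subst pm_comm) (simp add: pm_sum_right pm_comm)
lemma pm_left_commute: "pm d x (pm d y z) = pm d y (pm d x z)"
  by (metis pm_assoc pm_comm)

lemma pw_add: "pw d x (m + n) = pm d (pw d x m) (pw d x n)"
  by (induction m) (simp_all add: pm_assoc)
lemma pw_pm: "pw d (pm d x y) n = pm d (pw d x n) (pw d y n)"
  by (induction n) (simp_all, metis pm_assoc pm_comm)
lemma pw_mult: "pw d x (m * n) = pw d (pw d x m) n"
  by (induction n) (simp_all add: pw_add)
lemma pw_Suc2: "pw d x (Suc n) = pm d (pw d x n) x"
  by (simp add: pm_comm)
lemma pw_zero[simp]: "pw d 0 (Suc n) = 0" by simp

lemma pw4: "pw d x 4 = pm d x (pm d x (pm d x x))"
  by (simp add: numeral_eq_Suc)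


lemma pdv_even: "pdv (2*j) x \<longleftrightarrow> 2^j dvd fst x \<and> 2^j dvd snd x"
  by (simp add: pdv_def)
lemma pdv_odd: "pdv (Suc (2*j)) x \<longleftrightarrow> 2^(Suc j) dvd fst x \<and> 2^j dvd snd x"
  by (simp add: pdv_def)

lemma pdv_add: "pdv m x \<Longrightarrow> pdv m y \<Longrightarrow> pdv m (x + y)"
  by (simp add: pdv_def)
lemma pdv_diff: "pdv m x \<Longrightarrow> pdv m y \<Longrightarrow> pdv m (x - y)"
  by (simp add: pdv_def)
lemma pdv_uminus: "pdv m (- x) \<longleftrightarrow> pdv m x"
  by (simp add: pdv_def)
lemma pdv_zero[simp]: "pdv m 0" by (simp add: pdv_def)
lemma pdv_0[simp]: "pdv 0 x" by (simp add: pdv_def)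
lemma pdv_sum: "(\<And>i. i \<in> A \<Longrightarrow> pdv m (f i)) \<Longrightarrow> pdv m (\<Sum>i\<in>A. f i)"
  by (induction A rule: infinite_finite_induct) (auto intro: pdv_add)
lemma pdv_mono: "pdv m x \<Longrightarrow> k \<le> m \<Longrightarrow> pdv k x"
  unfolding pdv_def by (meson power_le_dvd div_le_mono add_le_mono1)
lemma pdv_diff_sym: "pdv m (x - y) \<longleftrightarrow> pdv m (y - x)"
  by (metis minus_diff_eq pdv_uminus)
lemma pdv_trans: "pdv m (x - y) \<Longrightarrow> pdv m (y - z) \<Longrightarrow> pdv m (x - z)"
  using pdv_add[of m "x - y" "y - z"] by simp

lemma pow_dvd_mult: "(2::int)^a dvd x \<Longrightarrow> 2^b dvd y \<Longrightarrow> c \<le> a + b \<Longrightarrow> 2^c dvd x * y"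
  by (metis mult_dvd_mono power_add power_le_dvd)

lemma pdv_mul: assumes "even d" "pdv m x" "pdv k y" shows "pdv (m + k) (pm d x y)"
proof -
  obtain e where e: "d = 2 * e" using assms(1) by blast
  have x1: "2^((m+1) div 2) dvd fst x" and x2: "2^(m div 2) dvd snd x"
    and y1: "2^((k+1) div 2) dvd fst y" and y2: "2^(k div 2) dvd snd y"
    using assms by (auto simp: pdv_def)
  have a: "2^((m+k+1) div 2) dvd fst x * fst y"
    by (rule pow_dvd_mult[OF x1 y1]) presburger
  have b0: "2^(Suc (m div 2 + k div 2)) dvd 2 * (snd x * snd y)"
    using pow_dvd_mult[OF x2 y2, of "m div 2 + k div 2"] by (simp add: mult_dvd_mono)
  have b: "2^((m+k+1) div 2) dvd d * snd x * snd y"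
  proof -
    have "2^((m+k+1) div 2) dvd (2::int)^(Suc (m div 2 + k div 2))"
      by (rule le_imp_power_dvd) presburger
    then have "2^((m+k+1) div 2) dvd 2 * (snd x * snd y)" using b0 dvd_trans by blast
    then have "2^((m+k+1) div 2) dvd 2 * (snd x * snd y) * e" by (rule dvd_mult2)
    then show ?thesis unfolding e by (simp add: ac_simps)
  qed
  have c: "2^((m+k) div 2) dvd fst x * snd y"
    by (rule pow_dvd_mult[OF x1 y2]) presburger
  have c2: "2^((m+k) div 2) dvd snd x * fst y"
    by (rule pow_dvd_mult[OF x2 y1]) presburger
  show ?thesis using a b c c2 by (simp add: pdv_def)
qed

lemma pdv_pw: "even d \<Longrightarrow> pdv m x \<Longrightarrow> pdv (m * k) (pw d x k)"
  by (induction k) (simp_all add: pdv_mul)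

lemma pdv_mul_left: "even d \<Longrightarrow> pdv m x \<Longrightarrow> pdv m (pm d x y)"
  using pdv_mul[of d m x 0 y] by simp
lemma pdv_mul_right: "even d \<Longrightarrow> pdv m y \<Longrightarrow> pdv m (pm d x y)"
  using pdv_mul[of d 0 x m y] by simp

lemma pdv_cong_mul: "even d \<Longrightarrow> pdv m (x - x') \<Longrightarrow> pdv m (y - y') \<Longrightarrow> pdv m (pm d x y - pm d x' y')"
proof -
  assume d: "even d" and a: "pdv m (x - x')" and b: "pdv m (y - y')"
  have "pm d x y - pm d x' y' = pm d (x - x') y + pm d x' (y - y')"
    by (simp add: pm_diff_left pm_diff_right)
  then show ?thesis using pdv_mul_left[OF d a] pdv_mul_right[OF d b] pdv_add by metis
qed

lemma pdv_cong_pw: "even d \<Longrightarrow> pdv m (x - x') \<Longrightarrow> pdv m (pw d x k - pw d x' k)"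
  by (induction k) (simp_all add: pdv_cong_mul)

lemma pdv_cong_sum: "(\<And>i. i \<in> A \<Longrightarrow> pdv m (f i - g i)) \<Longrightarrow> pdv m ((\<Sum>i\<in>A. f i) - (\<Sum>i\<in>A. g i))"
  by (simp add: sum_subtractf[symmetric] pdv_sum)

lemma pex_even: "pex (2*j) x \<longleftrightarrow> (\<exists>a b. odd a \<and> x = (2^j * a, 2^j * b))"
proof
  assume "pex (2*j) x"
  then have h: "2^j dvd fst x" "2^j dvd snd x" "\<not> 2^(Suc j) dvd fst x"
    by (auto simp: pex_def pdv_even pdv_odd)
  obtain a where a: "fst x = 2^j * a" using h(1) by blast
  obtain b where b: "snd x = 2^j * b" using h(2) by blast
  have "odd a" using h(3) a by auto
  then show "\<exists>a b. odd a \<and> x = (2^j * a, 2^j * b)" using a b by (metis prod.collapse)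
next
  assume "\<exists>a b. odd a \<and> x = (2^j * a, 2^j * b)"
  then obtain a b where "odd a" "x = (2^j * a, 2^j * b)" by blast
  then show "pex (2*j) x"
    by (auto simp: pex_def pdv_even pdv_odd)
qed

lemma pex_odd: "pex (Suc (2*j)) x \<longleftrightarrow> (\<exists>a b. odd b \<and> x = (2^Suc j * a, 2^j * b))"
proof
  assume "pex (Suc (2*j)) x"
  then have h: "2^Suc j dvd fst x" "2^j dvd snd x" "\<not> 2^(Suc j) dvd snd x"
    using pdv_even[of "Suc j" x] by (auto simp: pex_def pdv_odd)
  obtain a where a: "fst x = 2^Suc j * a" using h(1) by blast
  obtain b where b: "snd x = 2^j * b" using h(2) by blast
  have "odd b" using h(3) b by auto
  then show "\<exists>a b. odd b \<and> x = (2^Suc j * a, 2^j * b)" using a b by (metis prod.collapse)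
next
  assume "\<exists>a b. odd b \<and> x = (2^Suc j * a, 2^j * b)"
  then obtain a b where "odd b" "x = (2^Suc j * a, 2^j * b)" by blast
  then show "pex (Suc (2*j)) x"
    using pdv_even[of "Suc j" x] by (auto simp: pex_def pdv_odd)
qed

lemma pu_pex: "pu x \<longleftrightarrow> pex 0 x"
  using pex_even[of 0 x] by (auto simp: pu_def) (metis prod.collapse)

lemma nat_parity_cases: obtains j where "m = 2*j" | j where "m = Suc (2*j)"
  by (metis oddE evenE Suc_eq_plus1)


lemma d_even: "d mod 4 = (2::int) \<Longrightarrow> even d"
  by presburger

lemma d_half: "d mod 4 = (2::int) \<Longrightarrow> \<exists>e. d = 2 * e \<and> odd e"
  by presburger

lemma pex_mul_ee: assumes d: "even d" and x: "pex (2*i) x" and y: "pex (2*j) y"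
  shows "pex (2*(i+j)) (pm d x y)"
proof -
  obtain a b where ab: "odd a" "x = (2^i*a, 2^i*b)" using x pex_even by blast
  obtain a' b' where ab': "odd a'" "y = (2^j*a', 2^j*b')" using y pex_even by blast
  have "pm d x y = (2^(i+j) * (a*a' + d*b*b'), 2^(i+j)*(a*b' + b*a'))"
    by (simp add: ab ab' pm_def power_add algebra_simps)
  moreover have "odd (a*a' + d*b*b')" using ab ab' d by simp
  ultimately show ?thesis using pex_even by blast
qed

lemma pex_mul_oe: assumes d: "d = 2 * e" and x: "pex (Suc (2*i)) x" and y: "pex (2*j) y"
  shows "pex (Suc (2*(i+j))) (pm d x y)"
proof -
  obtain a b where ab: "odd b" "x = (2^Suc i*a, 2^i*b)" using x pex_odd by blast
  obtain a' b' where ab': "odd a'" "y = (2^j*a', 2^j*b')" using y pex_even by blast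
  have "pm d x y = (2^Suc (i+j) * (a*a' + e*b*b'), 2^(i+j)*(2*a*b' + b*a'))"
    by (simp add: ab ab' d pm_def power_add algebra_simps)
  moreover have "odd (2*a*b' + b*a')" using ab ab' by simp
  ultimately show ?thesis using pex_odd by blast
qed

lemma pex_mul_oo: assumes d: "d = 2 * e" "odd e" and x: "pex (Suc (2*i)) x" and y: "pex (Suc (2*j)) y"
  shows "pex (2*(Suc (i+j))) (pm d x y)"
proof -
  obtain a b where ab: "odd b" "x = (2^Suc i*a, 2^i*b)" using x pex_odd by blast
  obtain a' b' where ab': "odd b'" "y = (2^Suc j*a', 2^j*b')" using y pex_odd by blast
  have "pm d x y = (2^Suc (i+j) * (2*a*a' + e*b*b'), 2^Suc(i+j)*(a*b' + b*a'))"
    by (simp add: ab ab' d pm_def power_add algebra_simps)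
  moreover have "odd (2*a*a' + e*b*b')" using ab ab' d by simp
  ultimately show ?thesis using pex_even by blast
qed

lemma pex_mul: assumes d: "d mod 4 = 2" and x: "pex m x" and y: "pex k y"
  shows "pex (m + k) (pm d x y)"
proof -
  obtain e where e: "d = 2 * e" "odd e" using d_half[OF d] by blast
  have de: "even d" using e by simp
  show ?thesis
  proof (cases m rule: nat_parity_cases)
    case (1 i) note mi = this
    show ?thesis
    proof (cases k rule: nat_parity_cases)
      case (1 j) then show ?thesis using pex_mul_ee[OF de, of i x j y] x y mi by (simp add: algebra_simps)
    next
      case (2 j) then show ?thesis using pex_mul_oe[OF e(1), of j y i x] x y mi
        by (simp add: pm_comm algebra_simps)
    qed
  next
    case (2 i) note mi = this
    show ?thesis
    proof (cases k rule: nat_parity_cases)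
      case (1 j) then show ?thesis using pex_mul_oe[OF e(1), of i x j y] x y mi by (simp add: algebra_simps)
    next
      case (2 j) then show ?thesis using pex_mul_oo[OF e, of i x j y] x y mi
        by (simp add: algebra_simps)
    qed
  qed
qed

lemma pex_pw: "d mod 4 = 2 \<Longrightarrow> pex m x \<Longrightarrow> pex (m * k) (pw d x k)"
proof (induction k)
  case 0 then show ?case by (simp add: pex_def pdv_def)
next
  case (Suc k) then show ?case using pex_mul[of d m x "m*k"] by simp
qed

lemma pex_diff: assumes x: "pex m x" and y: "pex m y" shows "pdv (Suc m) (x - y)"
proof (cases m rule: nat_parity_cases)
  case (1 j)
  obtain a b where ab: "odd a" "x = (2^j*a, 2^j*b)" using x pex_even 1 by blast
  obtain a' b' where ab': "odd a'" "y = (2^j*a', 2^j*b')" using y pex_even 1 by blast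
  have "even (a - a')" using ab ab' by simp
  then obtain c where "a - a' = 2 * c" by blast
  then have "2^Suc j * c = 2^j*a - 2^j*a'" by (simp add: algebra_simps)
  then show ?thesis using 1 ab ab' pdv_odd[of j] by (auto simp: right_diff_distrib[symmetric])
next
  case (2 j)
  obtain a b where ab: "odd b" "x = (2^Suc j*a, 2^j*b)" using x pex_odd 2 by blast
  obtain a' b' where ab': "odd b'" "y = (2^Suc j*a', 2^j*b')" using y pex_odd 2 by blast
  have "even (b - b')" using ab ab' by simp
  then obtain c where "b - b' = 2 * c" by blast
  then have c: "2^Suc j * c = 2^j*b - 2^j*b'" by (simp add: algebra_simps)
  have "pdv (2 * Suc j) (x - y)" unfolding pdv_even using ab ab' c
    by (auto simp: right_diff_distrib[symmetric])
  then show ?thesis using 2 by simp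
qed

lemma pex_not: "pex m x \<Longrightarrow> m < k \<Longrightarrow> \<not> pdv k x"
  unfolding pex_def using pdv_mono by (metis Suc_leI)

lemma pex_pdv: "pex m x \<Longrightarrow> pdv m x" by (simp add: pex_def)

lemma not_pdv_exists: assumes "x \<noteq> 0" shows "\<exists>M. \<not> pdv M x"
proof -
  obtain c where c: "c \<noteq> 0" "c = fst x \<or> c = snd x" using assms by (metis prod_eq_iff fst_zero snd_zero)
  let ?n = "nat \<bar>c\<bar>"
  have "\<not> 2^?n dvd c"
  proof
    assume "2^?n dvd c"
    then have "\<bar>2^?n\<bar> \<le> \<bar>c\<bar>" using dvd_imp_le_int c(1) by blast
    moreover have "int ?n < 2^?n" using less_exp[of ?n] by (metis of_nat_less_iff of_nat_numeral of_nat_power)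
    ultimately show False using c(1) by simp
  qed
  then have "\<not> pdv (2 * ?n) x" using c by (auto simp: pdv_even)
  then show ?thesis by blast
qed

lemma val_exists: assumes "x \<noteq> 0" shows "\<exists>m. pex m x"
proof -
  obtain M where M: "\<not> pdv M x" using not_pdv_exists[OF assms] by blast
  define m0 where "m0 = (LEAST m. \<not> pdv m x)"
  have m0: "\<not> pdv m0 x" unfolding m0_def by (rule LeastI[of _ M]) (rule M)
  have "m0 \<noteq> 0" using m0 by (metis pdv_0)
  then obtain m' where m': "m0 = Suc m'" using not0_implies_Suc by blast
  have "pdv m' x" using not_less_Least[of m' "\<lambda>m. \<not> pdv m x"] m' m0_def by auto
  then show ?thesis using m0 m' pex_def by blast
qed

lemma pdv_cancel: assumes d: "d mod 4 = 2" and F: "pex f F" and h: "pdv (f + m) (pm d F x)"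
  shows "pdv m x"
proof (rule ccontr)
  assume n: "\<not> pdv m x"
  then have "x \<noteq> 0" by auto
  then obtain m' where m': "pex m' x" using val_exists by blast
  have "m' < m" using m' n pdv_mono pex_pdv by (metis not_less)
  then have "pex (f + m') (pm d F x)" using pex_mul[OF d F m'] by simp
  then show False using h pex_not \<open>m' < m\<close> by (metis add_less_mono1 add.commute nat_add_left_cancel_less)
qed

lemma pm_pow2: "pm d (2^k, 0) x = (2^k * fst x, 2^k * snd x)"
  by (simp add: pm_def)

lemma pdv_pow2: "pdv (2*k + m) ((2^k * fst x, 2^k * snd x)) \<longleftrightarrow> pdv m x"
proof -
  have "(2::int)^((2*k + m + 1) div 2) = 2^k * 2^((m+1) div 2)"
    by (simp add: power_add[symmetric])
  moreover have "(2::int)^((2*k + m) div 2) = 2^k * 2^(m div 2)"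
    by (simp add: power_add[symmetric])
  ultimately show ?thesis by (simp add: pdv_def)
qed

lemma pex_pow2: "pex (2*k + m) ((2^k * fst x, 2^k * snd x)) \<longleftrightarrow> pex m x"
  using pdv_pow2[of k m x] pdv_pow2[of k "Suc m" x] by (simp add: pex_def)

lemma pdv_factor: assumes "pdv (2*k) x" shows "\<exists>y. x = (2^k * fst y, 2^k * snd y)"
proof -
  obtain a where a: "fst x = 2^k * a" using assms by (auto simp: pdv_even)
  obtain b where b: "snd x = 2^k * b" using assms by (auto simp: pdv_even)
  show ?thesis using a b by (metis fst_conv snd_conv prod.collapse)
qed


definition hw :: "int \<Rightarrow> zp \<Rightarrow> zp \<Rightarrow> zp" where
  "hw d y \<delta> = pm d (6, 0) (pm d y y) + pm d (4, 0) (pm d y \<delta>) + pm d \<delta> \<delta>"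

lemma expand4: "pw d (y + \<delta>) 4 = pw d y 4 + pm d (4, 0) (pm d (pw d y 3) \<delta>) + pm d (pm d \<delta> \<delta>) (hw d y \<delta>)"
proof -
  obtain a b where y: "y = (a,b)" by (cases y)
  obtain p q where \<delta>: "\<delta> = (p,q)" by (cases \<delta>)
  show ?thesis unfolding y \<delta> by (simp add: pw4 numeral_eq_Suc hw_def pm_def) algebra
qed

lemma pex4: "pex 4 (4, 0)"
  using pex_even[of 2 "(4,0)"] by auto

lemma pex_pu_pw: "d mod 4 = 2 \<Longrightarrow> pu y \<Longrightarrow> pex 0 (pw d y k)"
  using pex_pw[of d 0 y k] pu_pex by simp

lemma pdv_hw: assumes d: "even d" and "pdv 1 \<delta>" shows "pdv 2 (hw d y \<delta>)"
proof -
  have "pdv 2 (6::int, 0::int)" by (simp add: pdv_def)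
  then have a: "pdv 2 (pm d (6, 0) (pm d y y))" using pdv_mul_left d by blast
  have "pdv 4 (4::int, 0::int)" by (simp add: pdv_def)
  then have "pdv 4 (pm d (4, 0) (pm d y \<delta>))" using pdv_mul_left[OF d] by blast
  then have b: "pdv 2 (pm d (4, 0) (pm d y \<delta>))" using pdv_mono by fastforce
  have c: "pdv 2 (pm d \<delta> \<delta>)" using pdv_mul[OF d assms(2) assms(2)] by (simp add: numeral_2_eq_2)
  show ?thesis unfolding hw_def using a b c pdv_add by blast
qed

lemma pdv_tail: assumes d: "even d" and B: "pdv c B" and \<delta>: "pdv k \<delta>" and k: "1 \<le> k"
  shows "pdv (c + 2*k + 2) (pm d B (pm d (pm d \<delta> \<delta>) (hw d y \<delta>)))"
proof -
  have "pdv 1 \<delta>" using \<delta> k pdv_mono by blast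
  then have "pdv 2 (hw d y \<delta>)" using pdv_hw d by blast
  moreover have "pdv (2*k) (pm d \<delta> \<delta>)" using pdv_mul[OF d \<delta> \<delta>] by (simp add: mult_2)
  ultimately have "pdv (2*k + 2) (pm d (pm d \<delta> \<delta>) (hw d y \<delta>))" using pdv_mul[OF d] by blast
  then show ?thesis using pdv_mul[OF d B, of "2*k+2"] by (simp add: add.assoc)
qed

lemma pex_lin: assumes d: "d mod 4 = 2" and B: "pex c B" and y: "pu y" and \<delta>: "pex k \<delta>"
  shows "pex (c + k + 4) (pm d B (pm d (4, 0) (pm d (pw d y 3) \<delta>)))"
proof -
  have "pex (0 + k) (pm d (pw d y 3) \<delta>)" using pex_mul[OF d pex_pu_pw[OF d y] \<delta>] .
  then have "pex (4 + k) (pm d (4, 0) (pm d (pw d y 3) \<delta>))" using pex_mul[OF d pex4] by simp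
  then show ?thesis using pex_mul[OF d B, of "4+k"] by (simp add: ac_simps)
qed

lemma pdv_lin: assumes d: "even d" and B: "pdv c B" and \<delta>: "pdv k \<delta>"
  shows "pdv (c + k + 4) (pm d B (pm d (4, 0) (pm d (pw d y 3) \<delta>)))"
proof -
  have "pdv 4 (4::int, 0::int)" by (simp add: pdv_def)
  then have "pdv (4 + k) (pm d (4, 0) (pm d (pw d y 3) \<delta>))" using pdv_mul[OF d] pdv_mul_right[OF d \<delta>] by blast
  then show ?thesis using pdv_mul[OF d B, of "4+k"] by (simp add: ac_simps)
qed

lemma pi_pex: "d mod 4 = 2 \<Longrightarrow> pex k (pw d (0, 1) k)"
  using pex_pw[of d 1 "(0,1)" k] pex_odd[of 0 "(0,1)"] by auto

lemma hstep: assumes d: "d mod 4 = 2" and B: "pex c B" and y: "pu y" and k: "3 \<le> k"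
  and h: "pdv (c + k + 4) (pm d B (pw d y 4) - T)"
  shows "\<exists>y'. pdv k (y' - y) \<and> pdv (c + k + 5) (pm d B (pw d y' 4) - T)"
proof (cases "pdv (c + k + 5) (pm d B (pw d y 4) - T)")
  case True then show ?thesis by (intro exI[of _ y]) simp
next
  case False
  define \<delta> where "\<delta> = pw d (0, 1) k"
  have de: "even d" using d by presburger
  have \<delta>: "pex k \<delta>" unfolding \<delta>_def using pi_pex[OF d] .
  define E where "E = pm d B (pw d y 4) - T"
  define Z where "Z = pm d B (pm d (4, 0) (pm d (pw d y 3) \<delta>))"
  define W where "W = pm d B (pm d (pm d \<delta> \<delta>) (hw d y \<delta>))"
  have s5: "Suc (c + k + 4) = c + k + 5" by simp
  have E: "pex (c + k + 4) E" using h False unfolding E_def pex_def s5 by blast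
  have Z: "pex (c + k + 4) (- Z)" using pex_lin[OF d B y \<delta>] unfolding Z_def pex_def pdv_uminus .
  have EZ: "pdv (c + k + 5) (E + Z)" using pex_diff[OF E Z] unfolding s5 by simp
  have W: "pdv (c + k + 5) W" unfolding W_def
    using pdv_tail[OF de pex_pdv[OF B] pex_pdv[OF \<delta>], of y] k pdv_mono by fastforce
  have "pm d B (pw d (y + \<delta>) 4) - T = (E + Z) + W"
    unfolding expand4 E_def Z_def W_def pm_add_right by simp
  then have "pdv (c + k + 5) (pm d B (pw d (y + \<delta>) 4) - T)" using EZ W pdv_add by simp
  moreover have "pdv k ((y + \<delta>) - y)" using \<delta> pex_pdv by simp
  ultimately show ?thesis by blast
qed

lemma huniq_step: assumes d: "d mod 4 = 2" and B: "pex c B" and y: "pu y" and m: "3 \<le> m"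
  and zy: "pdv m (z - y)" and h: "pdv (c + m + 5) (pm d B (pw d z 4) - pm d B (pw d y 4))"
  shows "pdv (Suc m) (z - y)"
proof (rule ccontr)
  assume n: "\<not> pdv (Suc m) (z - y)"
  define \<delta> where "\<delta> = z - y"
  have de: "even d" using d by presburger
  have \<delta>: "pex m \<delta>" using zy n unfolding \<delta>_def pex_def by simp
  define Z where "Z = pm d B (pm d (4, 0) (pm d (pw d y 3) \<delta>))"
  define W where "W = pm d B (pm d (pm d \<delta> \<delta>) (hw d y \<delta>))"
  have Z: "pex (c + m + 4) Z" using pex_lin[OF d B y \<delta>] unfolding Z_def .
  have W: "pdv (c + m + 5) W" unfolding W_def
    using pdv_tail[OF de pex_pdv[OF B] pex_pdv[OF \<delta>], of y] m pdv_mono by fastforce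
  have z: "z = y + \<delta>" unfolding \<delta>_def by simp
  have "pm d B (pw d z 4) - pm d B (pw d y 4) = Z + W"
    unfolding z expand4 Z_def W_def pm_add_right by simp
  then have "pdv (c + m + 5) Z" using h W pdv_diff[of _ "Z + W" W] by simp
  moreover have "c + m + 4 < c + m + 5" by simp
  ultimately show False using Z pex_not by blast
qed

lemma pdv5_pu: "pdv 5 (y - y0) \<Longrightarrow> pu y0 \<Longrightarrow> pu y"
proof -
  assume a: "pdv 5 (y - y0)" "pu y0"
  have "(2::int) ^ 3 dvd fst y - fst y0" using a(1) by (simp add: pdv_def)
  then have "2 dvd fst y - fst y0" by (metis dvd_trans dvd_triv_left power3_eq_cube mult.assoc)
  then show "pu y" using a(2) unfolding pu_def by presburger
qed

lemma hexist: assumes d: "d mod 4 = 2" and B: "pex c B" and y0: "pu y0"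
  and h: "pdv (c + 9) (pm d B (pw d y0 4) - T)" and k: "5 \<le> k"
  shows "\<exists>y. pdv 5 (y - y0) \<and> pdv (c + k + 4) (pm d B (pw d y 4) - T)"
  using k
proof (induction k rule: nat_induct_at_least)
  case base then show ?case using h by (intro exI[of _ y0]) (simp add: add.assoc)
next
  case (Suc k)
  then obtain y where y: "pdv 5 (y - y0)" "pdv (c + k + 4) (pm d B (pw d y 4) - T)" by blast
  have "pu y" using pdv5_pu y(1) y0 by blast
  then obtain y' where y': "pdv k (y' - y)" "pdv (c + k + 5) (pm d B (pw d y' 4) - T)"
    using hstep[OF d B _ _ y(2)] Suc.hyps by fastforce
  have "pdv 5 (y' - y)" using y'(1) Suc.hyps pdv_mono by blast
  then have "pdv 5 (y' - y0)" using y(1) pdv_trans by blast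
  moreover have "c + Suc k + 4 = c + k + 5" by simp
  ultimately show ?case using y'(2) by metis
qed

lemma huniq: assumes d: "d mod 4 = 2" and B: "pex c B" and y0: "pu y0"
  and y: "pdv 5 (y - y0)" and z: "pdv 5 (z - y0)" and M: "5 \<le> M"
  and h: "pdv (c + M + 4) (pm d B (pw d z 4) - pm d B (pw d y 4))"
  shows "pdv M (z - y)"
proof -
  have yu: "pu y" using pdv5_pu y y0 by blast
  have "m \<le> M \<Longrightarrow> pdv m (z - y)" if "5 \<le> m" for m
    using that
  proof (induction m rule: nat_induct_at_least)
    case base then show ?case using y z pdv_trans pdv_diff_sym by blast
  next
    case (Suc m)
    have "pdv m (z - y)" using Suc by simp
    moreover have "pdv (c + m + 5) (pm d B (pw d z 4) - pm d B (pw d y 4))"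
      using h pdv_mono Suc.prems by fastforce
    ultimately show ?case using huniq_step[OF d B yu] Suc.hyps by simp
  qed
  then show ?thesis using M by simp
qed


definition coh :: "(nat \<Rightarrow> zp) \<Rightarrow> bool" where
  "coh S \<longleftrightarrow> (\<forall>n. pdv (2*n) (S (Suc n) - S n))"

definition pmod :: "nat \<Rightarrow> zp \<Rightarrow> zp" where
  "pmod n x = (fst x mod 2^n, snd x mod 2^n)"

lemma coh_le: assumes "coh S" "n \<le> m" shows "pdv (2*n) (S m - S n)"
  using assms(2)
proof (induction m rule: dec_induct)
  case base then show ?case by simp
next
  case (step m)
  have "pdv (2*m) (S (Suc m) - S m)" using assms(1) coh_def by blast
  then have "pdv (2*n) (S (Suc m) - S m)" using pdv_mono step by simp
  then show ?case using step pdv_add[of "2*n" "S (Suc m) - S m" "S m - S n"] by simp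
qed

lemma pmod_cong: "pdv (2*n) (pmod n x - x)"
  unfolding pdv_even pmod_def by (simp add: mod_eq_dvd_iff[symmetric])

lemma pmod_eq: "pdv (2*n) (x - y) \<Longrightarrow> pmod n x = pmod n y"
  unfolding pdv_even pmod_def by (simp add: mod_eq_dvd_iff)

lemma pmod_pmod: "n \<le> m \<Longrightarrow> pmod n (pmod m x) = pmod n x"
  unfolding pmod_def by (simp add: mod_mod_cancel le_imp_power_dvd)

lemma pmod_range: "0 \<le> fst (pmod n x) \<and> fst (pmod n x) < 2^n \<and> 0 \<le> snd (pmod n x) \<and> snd (pmod n x) < 2^n"
  unfolding pmod_def by simp

lemma coh_pmod: assumes "coh S" shows "coh (\<lambda>n. pmod n (S n))"
  unfolding coh_def
proof
  fix n
  have a: "pdv (2*n) (pmod (Suc n) (S (Suc n)) - S (Suc n))" using pmod_cong[of "Suc n"] pdv_mono[of "2 * Suc n" _ "2*n"] by simp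
  have b: "pdv (2*n) (S (Suc n) - S n)" using assms coh_def by blast
  have c: "pdv (2*n) (S n - pmod n (S n))" using pmod_cong pdv_diff_sym by blast
  show "pdv (2*n) (pmod (Suc n) (S (Suc n)) - pmod n (S n))" using pdv_trans[OF pdv_trans[OF a b] c] .
qed

lemma coh_const: "coh (\<lambda>n. x)" by (simp add: coh_def)

lemma coh_pm: "even d \<Longrightarrow> coh S \<Longrightarrow> coh U \<Longrightarrow> coh (\<lambda>n. pm d (S n) (U n))"
  unfolding coh_def by (simp add: pdv_cong_mul)

lemma coh_pw: "even d \<Longrightarrow> coh S \<Longrightarrow> coh (\<lambda>n. pw d (S n) k)"
  unfolding coh_def by (simp add: pdv_cong_pw)

lemma coh_add: "coh S \<Longrightarrow> coh U \<Longrightarrow> coh (\<lambda>n. S n + U n)"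
proof -
  assume a: "coh S" "coh U"
  show ?thesis unfolding coh_def
  proof
    fix n
    have "S (Suc n) + U (Suc n) - (S n + U n) = (S (Suc n) - S n) + (U (Suc n) - U n)" by simp
    then show "pdv (2*n) (S (Suc n) + U (Suc n) - (S n + U n))" using a pdv_add unfolding coh_def by metis
  qed
qed

lemma coh_uminus: "coh S \<Longrightarrow> coh (\<lambda>n. - S n)"
proof -
  assume "coh S"
  show ?thesis unfolding coh_def
  proof
    fix n
    have "- S (Suc n) - - S n = - (S (Suc n) - S n)" by simp
    then show "pdv (2*n) (- S (Suc n) - - S n)" using \<open>coh S\<close> pdv_uminus unfolding coh_def by metis
  qed
qed

lemma coh_sum: "(\<And>i. i \<in> A \<Longrightarrow> coh (S i)) \<Longrightarrow> coh (\<lambda>n. \<Sum>i\<in>A. S i n)"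
  unfolding coh_def by (simp add: pdv_cong_sum)

theorem hensel_seq:
  assumes d: "d mod 4 = 2" and cB: "coh B" and cT: "coh T"
    and Bex: "\<And>n. n0 \<le> n \<Longrightarrow> pex c (B n)" and y0: "pu y0"
    and h0: "\<And>n. n1 \<le> n \<Longrightarrow> pdv (c + 9) (pm d (B n) (pw d y0 4) - T n)"
  shows "\<exists>Y. coh Y \<and> (\<forall>n. pmod n (Y n) = Y n) \<and> (\<forall>n. 1 \<le> n \<longrightarrow> pu (Y n))
          \<and> (\<forall>n. pdv (2*n) (pm d (B n) (pw d (Y n) 4) - T n))"
proof -
  have de: "even d" using d by presburger
  define L where "L = n0 + n1 + c + 10"
  define P where "P n y \<longleftrightarrow> pdv 5 (y - y0) \<and> pdv (2*(n+L)) (pm d (B (n+L)) (pw d y 4) - T (n+L))" for n y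
  have Pex: "\<exists>y. P n y" for n
  proof -
    have B': "pex c (B (n+L))" using Bex L_def by simp
    have h': "pdv (c + 9) (pm d (B (n+L)) (pw d y0 4) - T (n+L))" using h0 L_def by simp
    obtain y where "pdv 5 (y - y0)" "pdv (c + 2*(n+L) + 4) (pm d (B (n+L)) (pw d y 4) - T (n+L))"
      using hexist[OF d B' y0 h', of "2*(n+L)"] L_def by auto
    moreover have "2*(n+L) \<le> c + 2*(n+L) + 4" by simp
    ultimately show ?thesis unfolding P_def using pdv_mono by blast
  qed
  define Ys where "Ys n = (SOME y. P n y)" for n
  have PYs: "P n (Ys n)" for n unfolding Ys_def using Pex someI_ex by metis
  have uniq: "pdv (2*n) (z - y)" if z: "P n z" and y: "P n y" for n z y
  proof -
    have B': "pex c (B (n+L))" using Bex L_def by simp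
    have "pdv (2*(n+L)) ((pm d (B (n+L)) (pw d z 4) - T (n+L)) - (pm d (B (n+L)) (pw d y 4) - T (n+L)))"
      using z y unfolding P_def using pdv_diff by blast
    then have hh: "pdv (2*(n+L)) (pm d (B (n+L)) (pw d z 4) - pm d (B (n+L)) (pw d y 4))" by simp
    define M where "M = 2*(n+L) - c - 4"
    have M: "c + M + 4 = 2*(n+L)" "5 \<le> M" "2*n \<le> M" unfolding M_def L_def by auto
    have "pdv M (z - y)" using huniq[OF d B' y0, of y z M] z y M hh unfolding P_def by simp
    then show ?thesis using M pdv_mono by blast
  qed
  have Pdown: "P n z" if "P (Suc n) z" for n z
  proof -
    have a: "pdv (2*(n+L)) (pm d (B (Suc n+L)) (pw d z 4) - T (Suc n+L))"
      using that unfolding P_def using pdv_mono by fastforce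
    have b: "pdv (2*(n+L)) (B (Suc n + L) - B (n+L))" using coh_le[OF cB, of "n+L" "Suc n + L"] by simp
    have c: "pdv (2*(n+L)) (T (Suc n + L) - T (n+L))" using coh_le[OF cT, of "n+L" "Suc n + L"] by simp
    have b': "pdv (2*(n+L)) (pm d (B (n+L)) (pw d z 4) - pm d (B (Suc n+L)) (pw d z 4))"
      using pdv_cong_mul[OF de b, of "pw d z 4" "pw d z 4"] pdv_diff_sym by simp
    have "pdv (2*(n+L)) (pm d (B (n+L)) (pw d z 4) - T (n+L))"
      using pdv_trans[OF pdv_trans[OF b' a] c] .
    then show ?thesis using that unfolding P_def by simp
  qed
  define Y where "Y n = pmod n (Ys n)" for n
  have YY: "pdv (2*n) (Y n - Ys n)" for n unfolding Y_def using pmod_cong .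
  have cY: "coh Y" unfolding coh_def
  proof
    fix n
    have a: "pdv (2*n) (Y (Suc n) - Ys (Suc n))" using YY[of "Suc n"] pdv_mono by fastforce
    have b: "pdv (2*n) (Ys (Suc n) - Ys n)" using uniq[OF Pdown[OF PYs[of "Suc n"]] PYs[of n]] .
    have c: "pdv (2*n) (Ys n - Y n)" using YY pdv_diff_sym by blast
    show "pdv (2*n) (Y (Suc n) - Y n)" using pdv_trans[OF pdv_trans[OF a b] c] .
  qed
  have rY: "pmod n (Y n) = Y n" for n unfolding Y_def by (simp add: pmod_pmod)
  have uY: "pu (Y n)" if "1 \<le> n" for n
  proof -
    have "pu (Ys n)" using PYs[of n] pdv5_pu y0 unfolding P_def by blast
    moreover have "pdv 2 (Y n - Ys n)" using YY[of n] that pdv_mono by fastforce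
    ultimately show ?thesis unfolding pu_def pdv_def by simp
  qed
  have eq: "pdv (2*n) (pm d (B n) (pw d (Y n) 4) - T n)" for n
  proof -
    have a: "pdv (2*n) (pm d (B n) (pw d (Y n) 4) - pm d (B (n+L)) (pw d (Ys n) 4))"
      using pdv_cong_mul[OF de _ pdv_cong_pw[OF de YY]] coh_le[OF cB, of n "n+L"] pdv_diff_sym by simp
    have b: "pdv (2*n) (pm d (B (n+L)) (pw d (Ys n) 4) - T (n+L))"
      using PYs[of n] unfolding P_def using pdv_mono by fastforce
    have c: "pdv (2*n) (T (n+L) - T n)" using coh_le[OF cT, of n "n+L"] by simp
    show ?thesis using pdv_trans[OF pdv_trans[OF a b] c] .
  qed
  show ?thesis using cY rY uY eq by blast
qed


lemma Z2_iff: "x \<in> Z2 \<longleftrightarrow> (\<forall>n. 0 \<le> x n \<and> x n < 2^n \<and> x (Suc n) mod 2^n = x n)"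
  by (simp add: Z2_def)

lemma Z2_coh: assumes "x \<in> Z2" "n \<le> m" shows "x m mod 2^n = x n"
  using assms(2)
proof (induction m rule: dec_induct)
  case base then show ?case using assms(1) by (simp add: Z2_iff)
next
  case (step m)
  have "x (Suc m) mod 2^n = (x (Suc m) mod 2^m) mod 2^n"
    using step(1) by (simp add: mod_mod_cancel le_imp_power_dvd)
  also have "\<dots> = x m mod 2^n" using assms(1) by (simp add: Z2_iff)
  finally show ?case using step by simp
qed

lemma Z2_0: "x \<in> Z2 \<Longrightarrow> x 0 = 0"
  by (simp add: Z2_iff) (metis less_one power_0 order.antisym not_less zero_less_one int_one_le_iff_zero_less)

lemma z2_zero_eq: "z2_zero = (\<lambda>n. 0)"
  by (simp add: z2_zero_def z2_of_int_def)

lemma z2_of_int_Z2: "z2_of_int c \<in> Z2"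
  by (simp add: Z2_iff z2_of_int_def mod_mod_cancel)

lemma z2_zero_Z2: "z2_zero \<in> Z2"
  by (simp add: z2_zero_def z2_of_int_Z2)

lemma z2_add_Z2: assumes "x \<in> Z2" "y \<in> Z2" shows "z2_add x y \<in> Z2"
proof -
  have "((x (Suc n) + y (Suc n)) mod 2 ^ Suc n) mod 2^n = (x n + y n) mod 2^n" for n
  proof -
    have "((x (Suc n) + y (Suc n)) mod 2 ^ Suc n) mod 2^n = (x (Suc n) + y (Suc n)) mod 2^n"
      by (simp add: mod_mod_cancel)
    also have "\<dots> = (x (Suc n) mod 2^n + y (Suc n) mod 2^n) mod 2^n" by (simp add: mod_add_eq)
    finally show ?thesis using assms by (simp add: Z2_iff)
  qed
  then show ?thesis by (simp add: Z2_iff z2_add_def)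
qed

lemma z2_mul_Z2: assumes "x \<in> Z2" "y \<in> Z2" shows "z2_mul x y \<in> Z2"
proof -
  have "((x (Suc n) * y (Suc n)) mod 2 ^ Suc n) mod 2^n = (x n * y n) mod 2^n" for n
  proof -
    have "((x (Suc n) * y (Suc n)) mod 2 ^ Suc n) mod 2^n = (x (Suc n) * y (Suc n)) mod 2^n"
      by (simp add: mod_mod_cancel)
    also have "\<dots> = (x (Suc n) mod 2^n * (y (Suc n) mod 2^n)) mod 2^n" by (simp add: mod_mult_eq)
    finally show ?thesis using assms by (simp add: Z2_iff)
  qed
  then show ?thesis by (simp add: Z2_iff z2_mul_def)
qed

lemma dvd_mod_diff: "(m::int) dvd (x mod m - x)"
  by (metis mod_eq_dvd_iff mod_mod_trivial)

lemma Z2_nonzero: assumes "z \<in> Z2" "z \<noteq> z2_zero"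
  shows "\<forall>m \<le> z2_val z. z m = 0" "z (Suc (z2_val z)) = 2 ^ z2_val z"
proof -
  obtain n where n: "z n \<noteq> 0" using assms(2) unfolding z2_zero_eq by auto
  then have "n \<noteq> 0" using Z2_0[OF assms(1)] by (metis)
  then obtain n' where n': "n = Suc n'" using not0_implies_Suc by blast
  let ?v = "z2_val z"
  have ex: "z (Suc ?v) \<noteq> 0" unfolding z2_val_def by (rule LeastI[of _ n']) (use n n' in simp)
  show A: "\<forall>m \<le> ?v. z m = 0"
  proof (intro allI impI)
    fix m assume m: "m \<le> ?v"
    show "z m = 0"
    proof (cases m)
      case 0 then show ?thesis using Z2_0[OF assms(1)] by simp
    next
      case (Suc m')
      then have "m' < ?v" using m by simp
      then show ?thesis using not_less_Least[of m' "\<lambda>n. z (Suc n) \<noteq> 0"] Suc unfolding z2_val_def by auto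
    qed
  qed
  have r: "0 \<le> z (Suc ?v)" "z (Suc ?v) < 2 ^ Suc ?v" using assms(1) unfolding Z2_iff by blast+
  have "z (Suc ?v) mod 2 ^ ?v = z ?v" using assms(1) by (simp add: Z2_iff)
  then have m0: "z (Suc ?v) mod 2 ^ ?v = 0" using A by simp
  then obtain q where q: "z (Suc ?v) = 2 ^ ?v * q" by (metis dvd_def mod_0_imp_dvd)
  have "q \<noteq> 0" using q ex by auto
  moreover have "0 \<le> q" using q r(1) by (simp add: zero_le_mult_iff)
  ultimately have "q > 0" by simp
  moreover have "q < 2" using q r(2) by (simp add: power_Suc mult.commute[of 2])
  ultimately have "q = 1" by simp
  then show "z (Suc ?v) = 2 ^ ?v" using q by simp
qed

lemma Z2_val_ge: assumes "z \<in> Z2" "z \<noteq> z2_zero" "Suc (z2_val z) \<le> n"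
  shows "z n mod 2 ^ Suc (z2_val z) = 2 ^ z2_val z"
  using Z2_coh[OF assms(1) assms(3)] Z2_nonzero[OF assms(1,2)] by simp

definition qv :: "nat \<Rightarrow> q2 \<Rightarrow> nat \<Rightarrow> int" where
  "qv N p n = 2 ^ (N - fst p) * snd p n"

lemma Q2_iff: "(k, z) \<in> Q2 \<longleftrightarrow> z \<in> Z2 \<and> (k = 0 \<or> odd (z 1))"
  by (simp add: Q2_def)

lemma shift_facts: assumes z: "z \<in> Z2" and j: "z j = 0"
  shows "z2_shift j z \<in> Z2" "\<And>n. 2^j * z2_shift j z n = z (n + j)"
proof -
  have dv: "2^j dvd z (n + j)" for n
  proof -
    have "z (n + j) mod 2^j = z j" using Z2_coh[OF z, of j "n+j"] by simp
    then show ?thesis using j by (simp add: mod_0_imp_dvd)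
  qed
  show eq: "2^j * z2_shift j z n = z (n + j)" for n
    using dv[of n] by (simp add: z2_shift_def)
  show "z2_shift j z \<in> Z2" unfolding Z2_iff
  proof (intro allI conjI)
    fix n
    show "0 \<le> z2_shift j z n" using z unfolding Z2_iff z2_shift_def by (simp add: pos_imp_zdiv_nonneg_iff)
    have "z (n + j) < 2^n * 2^j" using z by (simp add: Z2_iff power_add[symmetric])
    then have "2^j * z2_shift j z n < 2^j * 2^n" using eq[of n] by (simp add: mult.commute)
    then show "z2_shift j z n < 2 ^ n" by simp
    have "z (Suc n + j) mod 2^(n + j) = z (n + j)" using Z2_coh[OF z, of "n+j" "Suc n + j"] by simp
    then have "(2^j * z2_shift j z (Suc n)) mod (2^j * 2^n) = 2^j * z2_shift j z n"
      using eq[of n] eq[of "Suc n"] by (simp add: power_add mult.commute)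
    then have "2^j * (z2_shift j z (Suc n) mod 2^n) = 2^j * z2_shift j z n"
      by (simp add: mod_mult_mult1)
    then show "z2_shift j z (Suc n) mod 2 ^ n = z2_shift j z n" by simp
  qed
qed

lemma norm_lemma: assumes z: "z \<in> Z2" and kN: "k \<le> N"
  shows "q2_norm k z \<in> Q2" "fst (q2_norm k z) \<le> k"
    "\<And>n. 2^n dvd (qv N (q2_norm k z) n - 2^(N - k) * z n)"
proof -
  have all: "q2_norm k z \<in> Q2 \<and> fst (q2_norm k z) \<le> k \<and> (\<forall>n. 2^n dvd (qv N (q2_norm k z) n - 2^(N - k) * z n))"
  proof (cases "z = z2_zero")
    case True
    then show ?thesis using z2_zero_Z2 by (simp add: q2_norm_def Q2_iff qv_def z2_zero_eq)
  next
    case False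
    let ?v = "z2_val z"
    define j where "j = min k ?v"
    have zj: "z j = 0" using Z2_nonzero(1)[OF z False] j_def by simp
    have nrm: "q2_norm k z = (k - j, z2_shift j z)" using False by (simp add: q2_norm_def j_def Let_def)
    note sh = shift_facts[OF z zj]
    have odd: "k - j = 0 \<or> odd (z2_shift j z 1)"
    proof (cases "k - j = 0")
      case False
      then have "j = ?v" using j_def by simp
      then have "2^j * z2_shift j z 1 = 2^j" using sh(2)[of 1] Z2_nonzero(2)[OF z] \<open>z \<noteq> z2_zero\<close> by simp
      then show ?thesis by simp
    qed simp
    have q: "2^n dvd (qv N (q2_norm k z) n - 2^(N - k) * z n)" for n
    proof -
      have "qv N (q2_norm k z) n = 2^(N - k) * (2^j * z2_shift j z n)"
        using kN j_def by (simp add: nrm qv_def power_add[symmetric])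
      also have "\<dots> = 2^(N-k) * z (n + j)" using sh(2) by simp
      finally have e: "qv N (q2_norm k z) n = 2^(N-k) * z (n + j)" .
      have "z (n + j) mod 2^n = z n" using Z2_coh[OF z, of n "n+j"] by simp
      moreover have "z n mod 2^n = z n" using Z2_coh[OF z, of n n] by simp
      ultimately have "2^n dvd z (n + j) - z n" by (simp add: mod_eq_dvd_iff[symmetric])
      then have "2^n dvd 2^(N-k) * (z (n + j) - z n)" by (rule dvd_mult)
      then show ?thesis unfolding e by (simp add: right_diff_distrib)
    qed
    show ?thesis using nrm sh(1) odd q by (simp add: Q2_iff)
  qed
  then show "q2_norm k z \<in> Q2" "fst (q2_norm k z) \<le> k"
    "\<And>n. 2^n dvd (qv N (q2_norm k z) n - 2^(N - k) * z n)" by auto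
qed


lemma Q2_fst_Z2: "p \<in> Q2 \<Longrightarrow> snd p \<in> Z2"
  by (cases p) (simp add: Q2_iff)

lemma z2_of_int_pow_mul: "z2_mul (z2_of_int c) z n = (c * z n) mod 2^n"
proof -
  have "(c mod 2^n * z n) mod 2^n = (c * z n) mod 2^n" by (simp add: mod_mult_left_eq)
  then show ?thesis by (simp add: z2_mul_def z2_of_int_def)
qed

lemma cong_dvd_mod: "(m::int) dvd (a mod m - a)" by (rule dvd_mod_diff)

lemma q2_add_lemma: assumes x: "x \<in> Q2" and y: "y \<in> Q2" and N: "fst x + fst y \<le> N"
  shows "q2_add x y \<in> Q2" "fst (q2_add x y) \<le> fst x + fst y"
    "\<And>n. 2^n dvd (qv N (q2_add x y) n - (qv N x n + qv N y n))"
proof -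
  obtain k z where kz: "x = (k, z)" by (cases x)
  obtain l w where lw: "y = (l, w)" by (cases y)
  have z: "z \<in> Z2" and w: "w \<in> Z2" using x y kz lw by (auto simp: Q2_iff)
  define Z where "Z = z2_add (z2_mul (z2_of_int (2 ^ l)) z) (z2_mul (z2_of_int (2 ^ k)) w)"
  have ZZ: "Z \<in> Z2" unfolding Z_def by (intro z2_add_Z2 z2_mul_Z2 z2_of_int_Z2 z w)
  have eq: "q2_add x y = q2_norm (k + l) Z" by (simp add: kz lw q2_add_def Z_def)
  have kl: "k + l \<le> N" using N kz lw by simp
  note nl = norm_lemma[OF ZZ kl]
  show "q2_add x y \<in> Q2" "fst (q2_add x y) \<le> fst x + fst y" using nl eq kz lw by auto
  fix n
  have Zn: "Z n = ((2^l * z n) mod 2^n + (2^k * w n) mod 2^n) mod 2^n"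
    by (simp add: Z_def z2_add_def z2_of_int_pow_mul)
  have "2^n dvd (Z n - (2^l * z n + 2^k * w n))"
  proof -
    have "Z n mod 2^n = (2^l * z n + 2^k * w n) mod 2^n" unfolding Zn by (simp add: mod_add_eq)
    then show ?thesis by (simp add: mod_eq_dvd_iff)
  qed
  then have "2^n dvd 2^(N - (k + l)) * (Z n - (2^l * z n + 2^k * w n))" by (rule dvd_mult)
  then have a: "2^n dvd (2^(N - (k + l)) * Z n - 2^(N - (k+l)) * (2^l * z n + 2^k * w n))"
    by (simp add: right_diff_distrib)
  have b: "2^(N - (k+l)) * (2^l * z n + 2^k * w n) = qv N x n + qv N y n"
  proof -
    have "(2::int)^(N - (k+l)) * 2^l = 2^(N - k)" using kl by (simp add: power_add[symmetric])
    moreover have "(2::int)^(N - (k+l)) * 2^k = 2^(N - l)" using kl by (simp add: power_add[symmetric])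
    ultimately show ?thesis by (simp add: kz lw qv_def algebra_simps)
  qed
  have c: "2^n dvd (qv N (q2_add x y) n - 2^(N - (k + l)) * Z n)" using nl(3) eq by simp
  show "2^n dvd (qv N (q2_add x y) n - (qv N x n + qv N y n))"
    using dvd_add[OF c a] b by (simp add: algebra_simps)
qed

lemma q2_mul_lemma: assumes x: "x \<in> Q2" and y: "y \<in> Q2" and N1: "fst x \<le> N1" and N2: "fst y \<le> N2"
  shows "q2_mul x y \<in> Q2" "fst (q2_mul x y) \<le> fst x + fst y"
    "\<And>n. 2^n dvd (qv (N1 + N2) (q2_mul x y) n - qv N1 x n * qv N2 y n)"
proof -
  obtain k z where kz: "x = (k, z)" by (cases x)
  obtain l w where lw: "y = (l, w)" by (cases y)
  have z: "z \<in> Z2" and w: "w \<in> Z2" using x y kz lw by (auto simp: Q2_iff)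
  define Z where "Z = z2_mul z w"
  have ZZ: "Z \<in> Z2" unfolding Z_def by (intro z2_mul_Z2 z w)
  have eq: "q2_mul x y = q2_norm (k + l) Z" by (simp add: kz lw q2_mul_def Z_def)
  have kl: "k + l \<le> N1 + N2" using N1 N2 kz lw by simp
  note nl = norm_lemma[OF ZZ kl]
  show "q2_mul x y \<in> Q2" "fst (q2_mul x y) \<le> fst x + fst y" using nl eq kz lw by auto
  fix n
  have "2^n dvd (Z n - z n * w n)" unfolding Z_def z2_mul_def by (rule dvd_mod_diff)
  then have "2^n dvd 2^(N1 + N2 - (k + l)) * (Z n - z n * w n)" by (rule dvd_mult)
  then have a: "2^n dvd (2^(N1 + N2 - (k + l)) * Z n - 2^(N1 + N2 - (k+l)) * (z n * w n))"
    by (simp add: right_diff_distrib)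
  have b: "2^(N1 + N2 - (k+l)) * (z n * w n) = qv N1 x n * qv N2 y n"
  proof -
    have "(2::int)^(N1 + N2 - (k+l)) = 2^(N1 - k) * 2^(N2 - l)"
      using N1 N2 kz lw by (simp add: power_add[symmetric])
    then show ?thesis by (simp add: kz lw qv_def algebra_simps)
  qed
  have c: "2^n dvd (qv (N1 + N2) (q2_mul x y) n - 2^(N1 + N2 - (k + l)) * Z n)" using nl(3) eq by simp
  show "2^n dvd (qv (N1 + N2) (q2_mul x y) n - qv N1 x n * qv N2 y n)"
    using dvd_add[OF c a] b by simp
qed

lemma q2_of_int_lemma: "q2_of_int c \<in> Q2" "fst (q2_of_int c) = 0" "2^n dvd (qv 0 (q2_of_int c) n - c)"
  by (simp_all add: q2_of_int_def Q2_iff z2_of_int_Z2) (simp add: qv_def z2_of_int_def dvd_mod_diff)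

lemma q2_zero_lemma: "q2_zero \<in> Q2" "fst q2_zero = 0" "qv N q2_zero n = 0"
  by (simp_all add: q2_zero_def Q2_iff z2_zero_Z2) (simp add: qv_def z2_zero_eq)

lemma q2_zero_inj: assumes x: "x \<in> Q2" and N: "fst x \<le> N" and h: "\<And>n. 2^n dvd qv N x n"
  shows "x = q2_zero"
proof -
  obtain k z where kz: "x = (k, z)" by (cases x)
  have z: "z \<in> Z2" using x kz by (simp add: Q2_iff)
  have "z n = 0" for n
  proof -
    let ?m = "n + (N - k)"
    have "2^?m dvd 2^(N-k) * z ?m" using h[of ?m] kz by (simp add: qv_def)
    then have "2^(N-k) * 2^n dvd 2^(N-k) * z ?m" by (simp add: power_add mult.commute)
    then have "2^n dvd z ?m" by simp
    then have "z ?m mod 2^n = 0" by simp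
    then show ?thesis using Z2_coh[OF z, of n ?m] by simp
  qed
  then have zz: "z = z2_zero" by (auto simp: z2_zero_eq)
  then have "k = 0" using x kz by (simp add: Q2_iff z2_zero_eq)
  then show ?thesis using kz zz by (simp add: q2_zero_def)
qed

lemma q2_val_lemma: assumes x: "x \<in> Q2" and nz: "x \<noteq> q2_zero" and N: "fst x \<le> N"
  shows "\<exists>n0. \<forall>n\<ge>n0. 2^(nat (int N + q2_val x)) dvd qv N x n \<and> \<not> 2^(Suc (nat (int N + q2_val x))) dvd qv N x n"
    "int N + q2_val x \<ge> 0"
proof -
  obtain k z where kz: "x = (k, z)" by (cases x)
  have z: "z \<in> Z2" using x kz by (simp add: Q2_iff)
  have znz: "z \<noteq> z2_zero"
  proof
    assume "z = z2_zero"
    then have "k = 0" using x kz by (simp add: Q2_iff z2_zero_eq)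
    then show False using nz kz \<open>z = z2_zero\<close> by (simp add: q2_zero_def)
  qed
  let ?v = "z2_val z"
  have e: "nat (int N + q2_val x) = (N - k) + ?v" using N kz by (simp add: q2_val_def)
  show "int N + q2_val x \<ge> 0" using N kz by (simp add: q2_val_def)
  have "2^(N - k + ?v) dvd qv N x n \<and> \<not> 2^(Suc (N - k + ?v)) dvd qv N x n" if n: "Suc ?v \<le> n" for n
  proof -
    have "z n mod 2 ^ Suc ?v = 2 ^ ?v" using Z2_val_ge[OF z znz n] .
    have "z n = 2 ^ Suc ?v * (z n div 2 ^ Suc ?v) + z n mod 2 ^ Suc ?v" by simp
    then obtain q where q: "z n = 2 ^ Suc ?v * q + 2 ^ ?v" using \<open>z n mod 2 ^ Suc ?v = 2 ^ ?v\<close> by metis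
    then have zq: "z n = 2 ^ ?v * (2 * q + 1)" by (simp add: algebra_simps)
    have qv: "qv N x n = 2^(N - k + ?v) * (2*q + 1)" by (simp add: kz qv_def zq power_add)
    show ?thesis unfolding qv by (simp add: power_Suc mult.commute[of 2])
  qed
  then show "\<exists>n0. \<forall>n\<ge>n0. 2^(nat (int N + q2_val x)) dvd qv N x n \<and> \<not> 2^(Suc (nat (int N + q2_val x))) dvd qv N x n"
    unfolding e by blast
qed


definition kv :: "nat \<Rightarrow> qk \<Rightarrow> nat \<Rightarrow> zp" where
  "kv N x n = (qv N (fst x) n, qv N (snd x) n)"

definition bnd :: "nat \<Rightarrow> qk \<Rightarrow> bool" where
  "bnd D x \<longleftrightarrow> fst x \<in> Q2 \<and> snd x \<in> Q2 \<and> fst (fst x) \<le> D \<and> fst (snd x) \<le> D"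

lemma bnd_Kset: "bnd D x \<Longrightarrow> x \<in> Kset"
  by (cases x) (simp add: bnd_def Kset_def)

lemma bnd_mono: "bnd D x \<Longrightarrow> D \<le> E \<Longrightarrow> bnd E x"
  by (simp add: bnd_def)

lemma K_add_lemma: assumes x: "bnd D x" and y: "bnd E y"
  shows "bnd (D + E) (K_add x y)"
    "D + E \<le> N \<Longrightarrow> pdv (2*n) (kv N (K_add x y) n - (kv N x n + kv N y n))"
proof -
  obtain p q where pq: "x = (p, q)" by (cases x)
  obtain r s where rs: "y = (r, s)" by (cases y)
  have P: "p \<in> Q2" "q \<in> Q2" "fst p \<le> D" "fst q \<le> D" using x pq by (auto simp: bnd_def)
  have R: "r \<in> Q2" "s \<in> Q2" "fst r \<le> E" "fst s \<le> E" using y rs by (auto simp: bnd_def)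
  have e: "K_add x y = (q2_add p r, q2_add q s)" by (simp add: pq rs K_add_def)
  have N1: "fst p + fst r \<le> D + E" "fst q + fst s \<le> D + E" using P R by auto
  show "bnd (D + E) (K_add x y)" unfolding e bnd_def
    using q2_add_lemma(1,2)[OF P(1) R(1) order_refl] q2_add_lemma(1,2)[OF P(2) R(2) order_refl] N1 by auto
  assume N: "D + E \<le> N"
  have "2^n dvd (qv N (q2_add p r) n - (qv N p n + qv N r n))"
    using q2_add_lemma(3)[OF P(1) R(1)] N1 N by simp
  moreover have "2^n dvd (qv N (q2_add q s) n - (qv N q n + qv N s n))"
    using q2_add_lemma(3)[OF P(2) R(2)] N1 N by simp
  ultimately show "pdv (2*n) (kv N (K_add x y) n - (kv N x n + kv N y n))"
    by (simp add: pdv_even kv_def pq rs K_add_def)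
qed

lemma int_cong_trans: "(m::int) dvd a - b \<Longrightarrow> m dvd b - c \<Longrightarrow> m dvd a - c"
  using dvd_add by fastforce

lemma int_cong_mult: "(m::int) dvd a - b \<Longrightarrow> m dvd c - e \<Longrightarrow> m dvd a * c - b * e"
proof -
  assume "m dvd a - b" "m dvd c - e"
  then have "m dvd (a - b) * c + b * (c - e)" by simp
  moreover have "(a - b) * c + b * (c - e) = a * c - b * e" by (simp add: algebra_simps)
  ultimately show ?thesis by simp
qed

lemma int_cong_add: "(m::int) dvd a - b \<Longrightarrow> m dvd c - e \<Longrightarrow> m dvd (a + c) - (b + e)"
proof -
  assume "m dvd a - b" "m dvd c - e"
  then have "m dvd (a - b) + (c - e)" by simp
  then show ?thesis by (simp add: algebra_simps)
qed

lemma K_mul_lemma: assumes x: "bnd D x" and y: "bnd 0 y"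
  shows "bnd (2*D) (K_mul d x y)"
    "2*D \<le> N \<Longrightarrow> pdv (2*n) (kv N (K_mul d x y) n - pm d (kv N x n) (kv 0 y n))"
proof -
  obtain p q where pq: "x = (p, q)" by (cases x)
  obtain r s where rs: "y = (r, s)" by (cases y)
  have P: "p \<in> Q2" "q \<in> Q2" "fst p \<le> D" "fst q \<le> D" using x pq by (auto simp: bnd_def)
  have R: "r \<in> Q2" "s \<in> Q2" "fst r = 0" "fst s = 0" using y rs by (auto simp: bnd_def)
  note dd = q2_of_int_lemma[where c=d]
  have e: "K_mul d x y = (q2_add (q2_mul p r) (q2_mul (q2_of_int d) (q2_mul q s)),
      q2_add (q2_mul p s) (q2_mul q r))" by (simp add: pq rs K_mul_def)
  note m1 = q2_mul_lemma[OF P(1) R(1) P(3), of 0]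
  note m2 = q2_mul_lemma[OF P(2) R(2) P(4), of 0]
  note m3 = q2_mul_lemma[OF P(1) R(2) P(3), of 0]
  note m4 = q2_mul_lemma[OF P(2) R(1) P(4), of 0]
  have f1: "q2_mul p r \<in> Q2" "fst (q2_mul p r) \<le> D" using m1 R P by auto
  have f2: "q2_mul q s \<in> Q2" "fst (q2_mul q s) \<le> D" using m2 R P by auto
  have f3: "q2_mul p s \<in> Q2" "fst (q2_mul p s) \<le> D" using m3 R P by auto
  have f4: "q2_mul q r \<in> Q2" "fst (q2_mul q r) \<le> D" using m4 R P by auto
  note m5 = q2_mul_lemma[OF dd(1) f2(1), of 0 D]
  have f5: "q2_mul (q2_of_int d) (q2_mul q s) \<in> Q2" "fst (q2_mul (q2_of_int d) (q2_mul q s)) \<le> D"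
    using m5 dd f2 by auto
  note a1 = q2_add_lemma[OF f1(1) f5(1), of "2*D"]
  note a2 = q2_add_lemma[OF f3(1) f4(1), of "2*D"]
  have b1: "fst (q2_add (q2_mul p r) (q2_mul (q2_of_int d) (q2_mul q s))) \<le> 2*D"
    using a1 f1 f5 by fastforce
  have b2: "fst (q2_add (q2_mul p s) (q2_mul q r)) \<le> 2*D"
    using a2 f3 f4 by fastforce
  show "bnd (2*D) (K_mul d x y)" unfolding e bnd_def using a1 a2 f1 f5 f3 f4 b1 b2 by auto
  assume N: "2*D \<le> N"
  have DN: "D \<le> N" using N by simp
  have c1: "2^n dvd qv N (q2_mul p r) n - qv N p n * qv 0 r n"
    using q2_mul_lemma(3)[OF P(1) R(1), of N 0] P DN R by simp
  have c2: "2^n dvd qv N (q2_mul q s) n - qv N q n * qv 0 s n"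
    using q2_mul_lemma(3)[OF P(2) R(2), of N 0] P DN R by simp
  have c3: "2^n dvd qv N (q2_mul p s) n - qv N p n * qv 0 s n"
    using q2_mul_lemma(3)[OF P(1) R(2), of N 0] P DN R by simp
  have c4: "2^n dvd qv N (q2_mul q r) n - qv N q n * qv 0 r n"
    using q2_mul_lemma(3)[OF P(2) R(1), of N 0] P DN R by simp
  have c5: "2^n dvd qv N (q2_mul (q2_of_int d) (q2_mul q s)) n - qv 0 (q2_of_int d) n * qv N (q2_mul q s) n"
    using q2_mul_lemma(3)[OF dd(1) f2(1), of 0 N] dd f2 DN by simp
  have c5': "2^n dvd qv N (q2_mul (q2_of_int d) (q2_mul q s)) n - d * (qv N q n * qv 0 s n)"
    using int_cong_trans[OF c5 int_cong_mult[OF dd(3) c2]] .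
  have c6: "2^n dvd qv N (q2_add (q2_mul p r) (q2_mul (q2_of_int d) (q2_mul q s))) n
      - (qv N (q2_mul p r) n + qv N (q2_mul (q2_of_int d) (q2_mul q s)) n)"
    using q2_add_lemma(3)[OF f1(1) f5(1), of N] f1 f5 N by simp
  have c7: "2^n dvd qv N (q2_add (q2_mul p s) (q2_mul q r)) n - (qv N (q2_mul p s) n + qv N (q2_mul q r) n)"
    using q2_add_lemma(3)[OF f3(1) f4(1), of N] f3 f4 N by simp
  have g1: "2^n dvd qv N (q2_add (q2_mul p r) (q2_mul (q2_of_int d) (q2_mul q s))) n
      - (qv N p n * qv 0 r n + d * (qv N q n * qv 0 s n))"
    using int_cong_trans[OF c6 int_cong_add[OF c1 c5']] .
  have g2: "2^n dvd qv N (q2_add (q2_mul p s) (q2_mul q r)) n - (qv N p n * qv 0 s n + qv N q n * qv 0 r n)"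
    using int_cong_trans[OF c7 int_cong_add[OF c3 c4]] .
  show "pdv (2*n) (kv N (K_mul d x y) n - pm d (kv N x n) (kv 0 y n))"
    unfolding pdv_even using g1 g2 by (simp add: K_mul_def kv_def pq rs algebra_simps)
qed

lemma K_pow_lemma: assumes x: "bnd 0 x" and d: "even d"
  shows "bnd 0 (K_pow d x k) \<and> pdv (2*n) (kv 0 (K_pow d x k) n - pw d (kv 0 x n) k)"
proof (induction k)
  case 0
  have "2^n dvd qv 0 (q2_of_int 1) n - 1" using q2_of_int_lemma(3)[of n 1] by simp
  then show ?case using q2_of_int_lemma[of 1] q2_zero_lemma
    by (simp add: bnd_def kv_def pdv_even)
next
  case (Suc k)
  have b: "bnd 0 (K_pow d x (Suc k))" using K_mul_lemma(1)[OF x, of "K_pow d x k" d] Suc by simp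
  have a: "pdv (2*n) (kv 0 (K_pow d x (Suc k)) n - pm d (kv 0 x n) (kv 0 (K_pow d x k) n))"
    using K_mul_lemma(2)[OF x, of "K_pow d x k" 0 n d] Suc by simp
  have c: "pdv (2*n) (pm d (kv 0 x n) (kv 0 (K_pow d x k) n) - pm d (kv 0 x n) (pw d (kv 0 x n) k))"
    by (rule pdv_cong_mul) (use Suc d in simp_all)
  show ?case using b pdv_trans[OF a c] by simp
qed

lemma K_sum_lemma: assumes "\<And>i. i \<in> set is \<Longrightarrow> bnd D (f i)"
  shows "bnd (length is * D) (K_sum f is)"
    "length is * D \<le> N \<Longrightarrow> pdv (2*n) (kv N (K_sum f is) n - (\<Sum>i\<leftarrow>is. kv N (f i) n))"
proof -
  have "bnd (length is * D) (K_sum f is) \<and> (length is * D \<le> N \<longrightarrow> pdv (2*n) (kv N (K_sum f is) n - (\<Sum>i\<leftarrow>is. kv N (f i) n)))"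
    using assms
  proof (induction "is")
    case Nil
    then show ?case using q2_zero_lemma by (simp add: K_sum_def K_zero_def bnd_def kv_def pdv_def)
  next
    case (Cons i "is")
    have fi: "bnd D (f i)" using Cons.prems by simp
    have IH: "bnd (length is * D) (K_sum f is)" "length is * D \<le> N \<Longrightarrow> pdv (2*n) (kv N (K_sum f is) n - (\<Sum>i\<leftarrow>is. kv N (f i) n))"
      using Cons by auto
    have ks: "K_sum f (i # is) = K_add (f i) (K_sum f is)" by (simp add: K_sum_def)
    note A = K_add_lemma[OF fi IH(1)]
    have "bnd (length (i # is) * D) (K_sum f (i # is))" using A(1) ks by (simp add: add.commute)
    moreover have "pdv (2*n) (kv N (K_sum f (i # is)) n - (\<Sum>i\<leftarrow>i # is. kv N (f i) n))"
      if N: "length (i # is) * D \<le> N"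
    proof -
      have N': "D + length is * D \<le> N" using N by simp
      have a: "pdv (2*n) (kv N (K_sum f (i # is)) n - (kv N (f i) n + kv N (K_sum f is) n))"
        using A(2)[OF N'] ks by simp
      have b: "pdv (2*n) ((kv N (f i) n + kv N (K_sum f is) n) - (kv N (f i) n + (\<Sum>i\<leftarrow>is. kv N (f i) n)))"
        using IH(2) N' by simp
      show ?thesis using pdv_trans[OF a b] by simp
    qed
    ultimately show ?case by blast
  qed
  then show "bnd (length is * D) (K_sum f is)"
    "length is * D \<le> N \<Longrightarrow> pdv (2*n) (kv N (K_sum f is) n - (\<Sum>i\<leftarrow>is. kv N (f i) n))" by auto
qed

lemma K_zero_inj: assumes x: "bnd N x" and h: "\<And>n. pdv (2*n) (kv N x n)"
  shows "x = K_zero"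
proof -
  obtain p q where pq: "x = (p, q)" by (cases x)
  have P: "p \<in> Q2" "q \<in> Q2" "fst p \<le> N" "fst q \<le> N" using x pq by (auto simp: bnd_def)
  have "p = q2_zero" using q2_zero_inj[OF P(1) P(3)] h pq by (simp add: pdv_even kv_def)
  moreover have "q = q2_zero" using q2_zero_inj[OF P(2) P(4)] h pq by (simp add: pdv_even kv_def)
  ultimately show ?thesis using pq by (simp add: K_zero_def)
qed

definition emb :: "(nat \<Rightarrow> zp) \<Rightarrow> qk" where
  "emb X = ((0, \<lambda>n. fst (X n)), (0, \<lambda>n. snd (X n)))"

lemma emb_lemma: assumes c: "coh X" and r: "\<And>n. pmod n (X n) = X n"
  shows "bnd 0 (emb X)" "kv 0 (emb X) n = X n"
proof -
  have rr: "0 \<le> fst (X n) \<and> fst (X n) < 2^n \<and> 0 \<le> snd (X n) \<and> snd (X n) < 2^n" for n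
    using pmod_range[of n "X n"] r[of n] by simp
  have cc: "fst (X (Suc n)) mod 2^n = fst (X n) \<and> snd (X (Suc n)) mod 2^n = snd (X n)" for n
  proof -
    have "pdv (2*n) (X (Suc n) - X n)" using c coh_def by blast
    then have "pmod n (X (Suc n)) = pmod n (X n)" by (rule pmod_eq)
    then have "pmod n (X (Suc n)) = X n" using r by simp
    then show ?thesis by (simp add: pmod_def prod_eq_iff)
  qed
  have "(\<lambda>n. fst (X n)) \<in> Z2" "(\<lambda>n. snd (X n)) \<in> Z2" using rr cc by (auto simp: Z2_iff)
  then show "bnd 0 (emb X)" by (simp add: emb_def bnd_def Q2_iff)
  show "kv 0 (emb X) n = X n" by (simp add: emb_def kv_def qv_def)
qed

lemma emb_zero: "emb (\<lambda>n. 0) = K_zero"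
  by (simp add: emb_def K_zero_def q2_zero_def z2_zero_eq)

lemma emb_nonzero: "emb X = K_zero \<Longrightarrow> X n = 0"
  by (simp add: emb_def K_zero_def q2_zero_def z2_zero_eq fun_eq_iff prod_eq_iff)


definition exv :: "nat \<Rightarrow> int \<Rightarrow> bool" where
  "exv e P \<longleftrightarrow> 2^e dvd P \<and> \<not> 2^(Suc e) dvd P"

lemma pex_mixed: assumes "exv e1 P" "exv e2 Q" shows "pex (min (2*e1) (Suc (2*e2))) (P, Q)"
proof (cases "e1 \<le> e2")
  case True
  then have m: "min (2*e1) (Suc (2*e2)) = 2*e1" by simp
  have "2^e1 dvd Q" using assms(2) True unfolding exv_def using power_le_dvd by blast
  then show ?thesis unfolding m pex_def pdv_odd pdv_even using assms(1) by (simp add: exv_def)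
next
  case False
  then have m: "min (2*e1) (Suc (2*e2)) = Suc (2*e2)" by simp
  have "2^Suc e2 dvd P" using assms(1) False unfolding exv_def using power_le_dvd
    by (metis not_le Suc_leI)
  moreover have "Suc (Suc (2 * e2)) = 2 * Suc e2" by simp
  ultimately show ?thesis unfolding m pex_def pdv_odd using assms(2) pdv_even[of "Suc e2" "(P,Q)"]
    by (simp add: exv_def)
qed

lemma pex_P0: assumes "exv e2 Q" shows "pex (Suc (2*e2)) (0, Q)"
proof -
  have "Suc (Suc (2 * e2)) = 2 * Suc e2" by simp
  then show ?thesis unfolding pex_def pdv_odd using assms pdv_even[of "Suc e2" "(0,Q)"]
    by (simp add: exv_def)
qed

lemma pex_Q0: assumes "exv e1 P" shows "pex (2*e1) (P, 0)"
  unfolding pex_def pdv_odd pdv_even using assms by (simp add: exv_def)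

lemma K_val_lemma: assumes a: "bnd D a" and nz: "a \<noteq> K_zero" and N: "D \<le> N"
  shows "K_val a + 2 * int N \<ge> 0" "\<exists>n0. \<forall>n\<ge>n0. pex (nat (K_val a + 2 * int N)) (kv N a n)"
proof -
  obtain p q where pq: "a = (p, q)" by (cases a)
  have P: "p \<in> Q2" "q \<in> Q2" "fst p \<le> N" "fst q \<le> N" using a pq N by (auto simp: bnd_def)
  have "(K_val a + 2 * int N \<ge> 0) \<and> (\<exists>n0. \<forall>n\<ge>n0. pex (nat (K_val a + 2 * int N)) (kv N a n))"
  proof (cases "p = q2_zero")
    case True
    then have qz: "q \<noteq> q2_zero" using nz pq by (simp add: K_zero_def)
    obtain n0 where n0: "\<forall>n\<ge>n0. exv (nat (int N + q2_val q)) (qv N q n)"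
      using q2_val_lemma(1)[OF P(2) qz P(4)] unfolding exv_def by blast
    have ge: "int N + q2_val q \<ge> 0" using q2_val_lemma(2)[OF P(2) qz P(4)] .
    have kv: "K_val a + 2 * int N = 2 * (int N + q2_val q) + 1" using True pq by (simp add: K_val_def)
    have e: "nat (K_val a + 2 * int N) = Suc (2 * nat (int N + q2_val q))" unfolding kv using ge by simp
    show ?thesis
    proof
      show "K_val a + 2 * int N \<ge> 0" using kv ge by simp
      show "\<exists>n0. \<forall>n\<ge>n0. pex (nat (K_val a + 2 * int N)) (kv N a n)"
        using n0 pex_P0 True pq q2_zero_lemma(3) unfolding e kv_def by (metis fst_conv snd_conv)
    qed
  next
    case False
    note pz = False
    obtain n1 where n1: "\<forall>n\<ge>n1. exv (nat (int N + q2_val p)) (qv N p n)"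
      using q2_val_lemma(1)[OF P(1) pz P(3)] unfolding exv_def by blast
    have ge1: "int N + q2_val p \<ge> 0" using q2_val_lemma(2)[OF P(1) pz P(3)] .
    show ?thesis
    proof (cases "q = q2_zero")
      case True
      have kv: "K_val a + 2 * int N = 2 * (int N + q2_val p)" using True pz pq by (simp add: K_val_def)
      have e: "nat (K_val a + 2 * int N) = 2 * nat (int N + q2_val p)" unfolding kv using ge1 by simp
      show ?thesis
      proof
        show "K_val a + 2 * int N \<ge> 0" using kv ge1 by simp
        show "\<exists>n0. \<forall>n\<ge>n0. pex (nat (K_val a + 2 * int N)) (kv N a n)"
          using n1 pex_Q0 True pq q2_zero_lemma(3) unfolding e kv_def by (metis fst_conv snd_conv)
      qed
    next
      case False
      obtain n2 where n2: "\<forall>n\<ge>n2. exv (nat (int N + q2_val q)) (qv N q n)"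
        using q2_val_lemma(1)[OF P(2) False P(4)] unfolding exv_def by blast
      have ge2: "int N + q2_val q \<ge> 0" using q2_val_lemma(2)[OF P(2) False P(4)] .
      have kv: "K_val a + 2 * int N = min (2 * (int N + q2_val p)) (2 * (int N + q2_val q) + 1)"
        using False pz pq by (simp add: K_val_def)
      have e: "nat (K_val a + 2 * int N) = min (2 * nat (int N + q2_val p)) (Suc (2 * nat (int N + q2_val q)))"
        unfolding kv using ge1 ge2 by simp
      show ?thesis
      proof
        show "K_val a + 2 * int N \<ge> 0" using kv ge1 ge2 by simp
        have "\<forall>n\<ge>max n1 n2. pex (nat (K_val a + 2 * int N)) (kv N a n)"
          using n1 n2 pex_mixed pq unfolding e kv_def by simp
        then show "\<exists>n0. \<forall>n\<ge>n0. pex (nat (K_val a + 2 * int N)) (kv N a n)" by blast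
      qed
    qed
  qed
  then show "K_val a + 2 * int N \<ge> 0" "\<exists>n0. \<forall>n\<ge>n0. pex (nat (K_val a + 2 * int N)) (kv N a n)" by auto
qed

lemma kv_coh: assumes "bnd D a" "D \<le> N" shows "coh (kv N a)"
proof -
  obtain p q where pq: "a = (p, q)" by (cases a)
  have z: "snd p \<in> Z2" "snd q \<in> Z2" using assms pq by (auto simp: bnd_def Q2_fst_Z2)
  have c: "2^n dvd (2^k * z (Suc n) - 2^k * z n)" if "z \<in> Z2" for z :: z2 and k n
  proof -
    have "z (Suc n) mod 2^n = z n mod 2^n" using that Z2_coh[OF that, of n n] by (simp add: Z2_iff)
    then have "2^n dvd z (Suc n) - z n" by (simp add: mod_eq_dvd_iff)
    then have "2^n dvd 2^k * (z (Suc n) - z n)" by (rule dvd_mult)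
    then show ?thesis by (simp add: right_diff_distrib)
  qed
  show ?thesis unfolding coh_def pdv_even kv_def qv_def using c z pq by simp
qed


definition D4 :: "int \<Rightarrow> bool" where "D4 d \<longleftrightarrow> d = 2 \<or> d = 10 \<or> d = -2 \<or> d = -10"

definition psi :: "int \<Rightarrow> zp \<Rightarrow> int" where
  "psi d h = (if d mod 8 = 2 then fst h else fst h + 2 * snd h)"

definition inH :: "int \<Rightarrow> zp \<Rightarrow> bool" where
  "inH d h \<longleftrightarrow> pdv 5 h \<and> 16 dvd psi d h"

lemma D4_mod4: "D4 d \<Longrightarrow> d mod 4 = 2" by (auto simp: D4_def)

lemma pdv5_iff: "pdv 5 h \<longleftrightarrow> 8 dvd fst h \<and> 4 dvd snd h" by (simp add: pdv_def)
lemma pdv9_iff: "pdv 9 h \<longleftrightarrow> 32 dvd fst h \<and> 16 dvd snd h" by (simp add: pdv_def)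

lemma psi_add: "psi d (x + y) = psi d x + psi d y" by (simp add: psi_def)
lemma psi_minus: "psi d (- x) = - psi d x" by (simp add: psi_def)
lemma psi_diff: "psi d (x - y) = psi d x - psi d y" by (simp add: psi_def)

lemma inH_add: "inH d x \<Longrightarrow> inH d y \<Longrightarrow> inH d (x + y)"
  by (simp add: inH_def psi_add pdv_add)
lemma inH_uminus: "inH d x \<Longrightarrow> inH d (- x)"
  by (simp add: inH_def psi_minus pdv_uminus)
lemma inH_cong: assumes "pdv 9 (x - y)" "inH d y" shows "inH d x"
proof -
  have "pdv 5 (x - y)" using assms(1) pdv_mono by fastforce
  moreover have "16 dvd psi d (x - y)"
  proof -
    have a: "32 dvd fst (x - y)" "16 dvd snd (x - y)" using assms(1) unfolding pdv9_iff by auto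
    have b: "16 dvd fst (x - y)" using a(1) by (rule dvd_trans[rotated]) simp
    have c: "16 dvd 2 * snd (x - y)" using a(2) by (rule dvd_mult)
    show ?thesis unfolding psi_def using b c by simp
  qed
  ultimately have "inH d (x - y)" by (simp add: inH_def)
  then show ?thesis using inH_add[of d "x - y" y] assms(2) by simp
qed

lemma inH_coset: assumes "pdv 5 x" "pdv 5 y" "\<not> inH d x" "\<not> inH d y" shows "inH d (x + y)"
proof -
  have a: "8 dvd fst x" "4 dvd snd x" "8 dvd fst y" "4 dvd snd y" using assms(1,2) by (auto simp: pdv5_iff)
  have b: "\<not> 16 dvd psi d x" "\<not> 16 dvd psi d y" using assms by (auto simp: inH_def)
  have "16 dvd psi d x + psi d y" using a b unfolding psi_def by (cases "d mod 8 = 2") (simp_all, presburger+)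
  then show ?thesis using assms(1,2) pdv_add by (simp add: inH_def psi_add)
qed

lemma inH_stab: assumes d: "D4 d" and w: "odd (fst w)" "even (snd w)" and h: "inH d h"
  shows "inH d (pm d w h)"
proof -
  obtain a b where ab: "w = (a, b)" by (cases w)
  obtain b' where b': "b = 2 * b'" using w ab by auto
  obtain h1 h2 where hh: "h = (h1, h2)" by (cases h)
  obtain k1 where k1: "h1 = 8 * k1" using h hh by (auto simp: inH_def pdv5_iff)
  obtain k2 where k2: "h2 = 4 * k2" using h hh by (auto simp: inH_def pdv5_iff)
  obtain e where e: "d = 2 * e" using d by (auto simp: D4_def)
  have ps: "16 dvd psi d h" using h by (simp add: inH_def)
  have f: "fst (pm d w h) = 8 * (a * k1 + 2 * e * b' * k2)" using ab b' k1 k2 e hh by (simp add: algebra_simps)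
  have s: "snd (pm d w h) = 4 * (a * k2 + 4 * b' * k1)" using ab b' k1 k2 e hh by (simp add: algebra_simps)
  have p5: "pdv 5 (pm d w h)" unfolding pdv5_iff f s by simp
  have "16 dvd psi d (pm d w h)"
  proof (cases "d mod 8 = 2")
    case True
    then have "16 dvd h1" using ps hh by (simp add: psi_def)
    then obtain m where m: "h1 = 16 * m" by blast
    have "fst (pm d w h) = 16 * (a * m + e * b' * k2)" using ab b' m k2 e hh by (simp add: algebra_simps)
    then show ?thesis using True by (simp add: psi_def)
  next
    case False
    then have "16 dvd h1 + 2 * h2" using ps hh by (simp add: psi_def)
    then obtain m where m: "h1 + 2 * h2 = 16 * m" by blast
    have "fst (pm d w h) + 2 * snd (pm d w h) = a * (h1 + 2 * h2) + 2 * b * (e * h2 + h1)"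
      using ab hh e by (simp add: algebra_simps)
    also have "\<dots> = 16 * (a * m + b' * (e * k2 + 2 * k1))" using m b' k1 k2 by (simp add: algebra_simps)
    finally show ?thesis using False by (simp add: psi_def)
  qed
  then show ?thesis using p5 by (simp add: inH_def)
qed


lemma root_case:
  assumes "fst h mod 32 = A" "snd h mod 16 = B" "32 dvd fst (pw d y 4) - 1 - A" "16 dvd snd (pw d y 4) - B" "odd (fst y)"
  shows "\<exists>y. pu y \<and> pdv 9 (pw d y 4 - (1,0) - h)"
proof -
  have "32 dvd fst (pw d y 4) - 1 - fst h" using assms(1,3) by presburger
  moreover have "16 dvd snd (pw d y 4) - snd h" using assms(2,4) by presburger
  ultimately show ?thesis using assms(5) by (intro exI[of _ y]) (simp add: pu_def pdv9_iff)
qed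

lemma roots_2: assumes "inH 2 h" shows "\<exists>y. pu y \<and> pdv 9 (pw 2 y 4 - (1,0) - h)"
proof -
  have h: "8 dvd fst h" "4 dvd snd h" "16 dvd psi 2 h" using assms by (auto simp: inH_def pdv5_iff)
  have "(fst h mod 32 = 0 \<and> snd h mod 16 = 0) \<or>
    (fst h mod 32 = 0 \<and> snd h mod 16 = 4) \<or>
    (fst h mod 32 = 0 \<and> snd h mod 16 = 8) \<or>
    (fst h mod 32 = 0 \<and> snd h mod 16 = 12) \<or>
    (fst h mod 32 = 16 \<and> snd h mod 16 = 0) \<or>
    (fst h mod 32 = 16 \<and> snd h mod 16 = 4) \<or>
    (fst h mod 32 = 16 \<and> snd h mod 16 = 8) \<or>
    (fst h mod 32 = 16 \<and> snd h mod 16 = 12)"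
    using h unfolding psi_def by simp presburger
  then show ?thesis
    apply (elim disjE conjE)
    apply (rule root_case[where y="(1,0)"], assumption, assumption, simp add: pw4 pm_def, simp add: pw4 pm_def, simp)
    apply (rule root_case[where y="(3,1)"], assumption, assumption, simp add: pw4 pm_def, simp add: pw4 pm_def, simp)
    apply (rule root_case[where y="(3,2)"], assumption, assumption, simp add: pw4 pm_def, simp add: pw4 pm_def, simp)
    apply (rule root_case[where y="(3,3)"], assumption, assumption, simp add: pw4 pm_def, simp add: pw4 pm_def, simp)
    apply (rule root_case[where y="(3,0)"], assumption, assumption, simp add: pw4 pm_def, simp add: pw4 pm_def, simp)
    apply (rule root_case[where y="(1,3)"], assumption, assumption, simp add: pw4 pm_def, simp add: pw4 pm_def, simp)
    apply (rule root_case[where y="(1,2)"], assumption, assumption, simp add: pw4 pm_def, simp add: pw4 pm_def, simp)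
    apply (rule root_case[where y="(1,1)"], assumption, assumption, simp add: pw4 pm_def, simp add: pw4 pm_def, simp)
    done
qed

lemma roots_10: assumes "inH 10 h" shows "\<exists>y. pu y \<and> pdv 9 (pw 10 y 4 - (1,0) - h)"
proof -
  have h: "8 dvd fst h" "4 dvd snd h" "16 dvd psi 10 h" using assms by (auto simp: inH_def pdv5_iff)
  have "(fst h mod 32 = 0 \<and> snd h mod 16 = 0) \<or>
    (fst h mod 32 = 0 \<and> snd h mod 16 = 4) \<or>
    (fst h mod 32 = 0 \<and> snd h mod 16 = 8) \<or>
    (fst h mod 32 = 0 \<and> snd h mod 16 = 12) \<or>
    (fst h mod 32 = 16 \<and> snd h mod 16 = 0) \<or>
    (fst h mod 32 = 16 \<and> snd h mod 16 = 4) \<or>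
    (fst h mod 32 = 16 \<and> snd h mod 16 = 8) \<or>
    (fst h mod 32 = 16 \<and> snd h mod 16 = 12)"
    using h unfolding psi_def by simp presburger
  then show ?thesis
    apply (elim disjE conjE)
    apply (rule root_case[where y="(1,0)"], assumption, assumption, simp add: pw4 pm_def, simp add: pw4 pm_def, simp)
    apply (rule root_case[where y="(1,3)"], assumption, assumption, simp add: pw4 pm_def, simp add: pw4 pm_def, simp)
    apply (rule root_case[where y="(3,2)"], assumption, assumption, simp add: pw4 pm_def, simp add: pw4 pm_def, simp)
    apply (rule root_case[where y="(1,1)"], assumption, assumption, simp add: pw4 pm_def, simp add: pw4 pm_def, simp)
    apply (rule root_case[where y="(3,0)"], assumption, assumption, simp add: pw4 pm_def, simp add: pw4 pm_def, simp)
    apply (rule root_case[where y="(3,1)"], assumption, assumption, simp add: pw4 pm_def, simp add: pw4 pm_def, simp)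
    apply (rule root_case[where y="(1,2)"], assumption, assumption, simp add: pw4 pm_def, simp add: pw4 pm_def, simp)
    apply (rule root_case[where y="(3,3)"], assumption, assumption, simp add: pw4 pm_def, simp add: pw4 pm_def, simp)
    done
qed

lemma roots_m2: assumes "inH (-2) h" shows "\<exists>y. pu y \<and> pdv 9 (pw (-2) y 4 - (1,0) - h)"
proof -
  have h: "8 dvd fst h" "4 dvd snd h" "16 dvd psi (-2) h" using assms by (auto simp: inH_def pdv5_iff)
  have "(fst h mod 32 = 0 \<and> snd h mod 16 = 0) \<or>
    (fst h mod 32 = 0 \<and> snd h mod 16 = 8) \<or>
    (fst h mod 32 = 8 \<and> snd h mod 16 = 4) \<or>
    (fst h mod 32 = 8 \<and> snd h mod 16 = 12) \<or>
    (fst h mod 32 = 16 \<and> snd h mod 16 = 0) \<or>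
    (fst h mod 32 = 16 \<and> snd h mod 16 = 8) \<or>
    (fst h mod 32 = 24 \<and> snd h mod 16 = 4) \<or>
    (fst h mod 32 = 24 \<and> snd h mod 16 = 12)"
    using h unfolding psi_def by simp presburger
  then show ?thesis
    apply (elim disjE conjE)
    apply (rule root_case[where y="(1,0)"], assumption, assumption, simp add: pw4 pm_def, simp add: pw4 pm_def, simp)
    apply (rule root_case[where y="(3,2)"], assumption, assumption, simp add: pw4 pm_def, simp add: pw4 pm_def, simp)
    apply (rule root_case[where y="(3,1)"], assumption, assumption, simp add: pw4 pm_def, simp add: pw4 pm_def, simp)
    apply (rule root_case[where y="(3,3)"], assumption, assumption, simp add: pw4 pm_def, simp add: pw4 pm_def, simp)
    apply (rule root_case[where y="(3,0)"], assumption, assumption, simp add: pw4 pm_def, simp add: pw4 pm_def, simp)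
    apply (rule root_case[where y="(1,2)"], assumption, assumption, simp add: pw4 pm_def, simp add: pw4 pm_def, simp)
    apply (rule root_case[where y="(1,3)"], assumption, assumption, simp add: pw4 pm_def, simp add: pw4 pm_def, simp)
    apply (rule root_case[where y="(1,1)"], assumption, assumption, simp add: pw4 pm_def, simp add: pw4 pm_def, simp)
    done
qed

lemma roots_m10: assumes "inH (-10) h" shows "\<exists>y. pu y \<and> pdv 9 (pw (-10) y 4 - (1,0) - h)"
proof -
  have h: "8 dvd fst h" "4 dvd snd h" "16 dvd psi (-10) h" using assms by (auto simp: inH_def pdv5_iff)
  have "(fst h mod 32 = 0 \<and> snd h mod 16 = 0) \<or>
    (fst h mod 32 = 0 \<and> snd h mod 16 = 8) \<or>
    (fst h mod 32 = 8 \<and> snd h mod 16 = 4) \<or>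
    (fst h mod 32 = 8 \<and> snd h mod 16 = 12) \<or>
    (fst h mod 32 = 16 \<and> snd h mod 16 = 0) \<or>
    (fst h mod 32 = 16 \<and> snd h mod 16 = 8) \<or>
    (fst h mod 32 = 24 \<and> snd h mod 16 = 4) \<or>
    (fst h mod 32 = 24 \<and> snd h mod 16 = 12)"
    using h unfolding psi_def by simp presburger
  then show ?thesis
    apply (elim disjE conjE)
    apply (rule root_case[where y="(1,0)"], assumption, assumption, simp add: pw4 pm_def, simp add: pw4 pm_def, simp)
    apply (rule root_case[where y="(3,2)"], assumption, assumption, simp add: pw4 pm_def, simp add: pw4 pm_def, simp)
    apply (rule root_case[where y="(1,3)"], assumption, assumption, simp add: pw4 pm_def, simp add: pw4 pm_def, simp)
    apply (rule root_case[where y="(1,1)"], assumption, assumption, simp add: pw4 pm_def, simp add: pw4 pm_def, simp)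
    apply (rule root_case[where y="(3,0)"], assumption, assumption, simp add: pw4 pm_def, simp add: pw4 pm_def, simp)
    apply (rule root_case[where y="(1,2)"], assumption, assumption, simp add: pw4 pm_def, simp add: pw4 pm_def, simp)
    apply (rule root_case[where y="(3,1)"], assumption, assumption, simp add: pw4 pm_def, simp add: pw4 pm_def, simp)
    apply (rule root_case[where y="(3,3)"], assumption, assumption, simp add: pw4 pm_def, simp add: pw4 pm_def, simp)
    done
qed


lemma roots: assumes "D4 d" "inH d h" shows "\<exists>y. pu y \<and> pdv 9 (pw d y 4 - (1,0) - h)"
proof -
  have "d = 2 \<or> d = 10 \<or> d = -2 \<or> d = -10" using assms(1) unfolding D4_def .
  then show ?thesis
  proof (elim disjE)
    assume "d = 2" then show ?thesis using roots_2 assms(2) by blast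
  next
    assume "d = 10" then show ?thesis using roots_10 assms(2) by blast
  next
    assume "d = -2" then show ?thesis using roots_m2[of h] assms(2) by simp
  next
    assume "d = -10" then show ?thesis using roots_m10[of h] assms(2) by simp
  qed
qed

lemma four_dvd_aux: "odd (t::int) \<Longrightarrow> x = 6 + 8 * a + 4 * s + 2 * t \<Longrightarrow> 4 dvd x" by presburger

lemma unit_pow4: assumes d: "d mod 4 = 2" and u: "pu u" shows "pdv 5 (pw d u 4 - (1,0))"
proof -
  have de: "even d" using d by presburger
  define z where "z = u - (1,0)"
  have z1: "pdv 1 z" using u unfolding z_def pu_def pdv_def by simp
  have u': "u = (1,0) + z" unfolding z_def by simp
  have e: "pw d u 4 - (1,0) = pm d (4,0) (pm d (pw d (1,0) 3) z) + pm d (pm d z z) (hw d (1,0) z)"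
    unfolding u' expand4 by (simp add: pw4 numeral_eq_Suc)
  have a: "pdv 5 (pm d (4,0) (pm d (pw d (1,0) 3) z))"
  proof -
    have "pdv 4 (4::int, 0::int)" by (simp add: pdv_def)
    from pdv_mul[OF de this pdv_mul_right[OF de z1, of "pw d (1,0) 3"]] show ?thesis by simp
  qed
  have b: "pdv 5 (pm d (pm d z z) (hw d (1,0) z))"
  proof (cases "pdv 2 z")
    case True
    have "pdv 4 (pm d z z)" using pdv_mul[OF de True True] by simp
    moreover have "pdv 2 (hw d (1,0) z)" using pdv_hw[OF de z1] .
    ultimately have "pdv (4 + 2) (pm d (pm d z z) (hw d (1,0) z))" by (rule pdv_mul[OF de])
    then show ?thesis by (rule pdv_mono) simp
  next
    case False
    then have "pex (Suc (2*0)) z" using z1 by (simp add: pex_def numeral_2_eq_2)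
    then obtain a b where ab: "odd b" "z = (2 * a, b)" using pex_odd[of 0 z] by auto
    obtain e where e: "d = 2 * e" "odd e" using d_half[OF d] by blast
    have zz: "pdv 2 (pm d z z)" using pdv_mul[OF de z1 z1] by (simp add: numeral_2_eq_2)
    have "fst (hw d (1,0) z) = 6 + 8 * a + 4 * (a * a) + 2 * (e * b * b)" using ab e
      by (simp add: hw_def algebra_simps)
    moreover have "odd (e * b * b)" using ab e by simp
    ultimately have "4 dvd fst (hw d (1,0) z)" using four_dvd_aux[of "e * b * b" _ a "a * a"] by blast
    moreover have "snd (hw d (1,0) z) = 4 * b + 4 * a * b" using ab by (simp add: hw_def algebra_simps)
    ultimately have "pdv 3 (hw d (1,0) z)" by (simp add: pdv_def)
    from pdv_mul[OF de zz this] show ?thesis by simp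
  qed
  show ?thesis unfolding e using a b pdv_add by blast
qed

lemma odd16a: "odd (t::int) \<Longrightarrow> \<not> 16 dvd 8 * t" by presburger
lemma odd16b: "odd (t::int) \<Longrightarrow> \<not> 16 dvd 8 * a + 8 * t + 2 * (4 * a + 8 * b)" by presburger

definition hstar :: "int \<Rightarrow> zp" where "hstar d = (if d mod 8 = 2 then (0, 4) else (8, 4))"

lemma hstar_inH: "D4 d \<Longrightarrow> inH d (hstar d)"
  by (auto simp: D4_def hstar_def inH_def psi_def pdv5_iff)

lemma hstar_odd: assumes d: "D4 d" and u: "odd (fst u)" "odd (snd u)"
  shows "pdv 5 (pm d u (hstar d)) \<and> \<not> inH d (pm d u (hstar d))"
proof -
  obtain a b where ab: "u = (a, b)" by (cases u)
  obtain e where e: "d = 2 * e" "odd e" using d_half[OF D4_mod4[OF d]] by blast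
  have ob: "odd (e * b)" using e u ab by simp
  show ?thesis
  proof (cases "d mod 8 = 2")
    case True
    have f: "fst (pm d u (hstar d)) = 8 * (e * b)" using True ab e by (simp add: hstar_def)
    have s: "snd (pm d u (hstar d)) = 4 * a" using True ab by (simp add: hstar_def)
    have "\<not> 16 dvd 8 * (e * b)" using odd16a[OF ob] .
    then show ?thesis using f s True by (simp add: inH_def psi_def pdv5_iff)
  next
    case False
    have f: "fst (pm d u (hstar d)) = 8 * a + 8 * (e * b)" using False ab e by (simp add: hstar_def)
    have s: "snd (pm d u (hstar d)) = 4 * a + 8 * b" using False ab by (simp add: hstar_def)
    have "\<not> 16 dvd 8 * a + 8 * (e * b) + 2 * (4 * a + 8 * b)" using odd16b[OF ob] .
    moreover have "8 dvd 8 * a + 8 * (e * b)" by presburger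
    moreover have "4 dvd 4 * a + 8 * b" by presburger
    ultimately show ?thesis using f s False by (simp add: inH_def psi_def pdv5_iff)
  qed
qed

lemma pw_one: "pw d (1,0) k = (1,0)" by (induction k) simp_all

lemma adjust_even: assumes d: "D4 d" and u: "odd (fst u)" "even (snd u)" and G: "inH d G"
  shows "\<exists>y. pu y \<and> pdv 9 (G + pm d u (pw d y 4 - (1,0)))"
proof -
  have d4: "d mod 4 = 2" using D4_mod4[OF d] .
  have de: "even d" using d4 by presburger
  have u3: "odd (fst (pw d u 3)) \<and> even (snd (pw d u 3))"
    using u de by (simp add: numeral_eq_Suc)
  define h where "h = - pm d (pw d u 3) G"
  have hH: "inH d h" unfolding h_def using inH_uminus inH_stab[OF d] u3 G by blast
  obtain y where y: "pu y" "pdv 9 (pw d y 4 - (1,0) - h)" using roots[OF d hH] by blast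
  have pu: "pu u" using u by (simp add: pu_def)
  have p4: "pw d u 4 = pm d u (pw d u 3)" by (simp add: eval_nat_numeral)
  have uh: "pm d u h = - pm d (pw d u 4) G" unfolding h_def p4 by (simp add: pm_minus_right pm_assoc)
  have e: "G + pm d u (pw d y 4 - (1,0)) = pm d u (pw d y 4 - (1,0) - h) - pm d (pw d u 4 - (1,0)) G"
    by (simp add: pm_diff_right pm_diff_left uh)
  have a: "pdv 9 (pm d u (pw d y 4 - (1,0) - h))" using pdv_mul_right[OF de y(2)] .
  have "pdv 10 (pm d (pw d u 4 - (1,0)) G)"
    using pdv_mul[OF de unit_pow4[OF d4 pu] inH_def[THEN iffD1, OF G, THEN conjunct1]] by simp
  then have b: "pdv 9 (pm d (pw d u 4 - (1,0)) G)" using pdv_mono by fastforce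
  show ?thesis using y(1) pdv_diff[OF a b] unfolding e[symmetric] by blast
qed

lemma adjust_odd: assumes d: "D4 d" and u: "odd (fst u)" "odd (snd u)" and G: "pdv 5 G"
  shows "\<exists>y. pu y \<and> inH d (G + pm d u (pw d y 4 - (1,0)))"
proof (cases "inH d G")
  case True
  then show ?thesis by (intro exI[of _ "(1,0)"]) (simp add: pu_def pw_one)
next
  case False
  have de: "even d" using D4_mod4[OF d] by presburger
  obtain y where y: "pu y" "pdv 9 (pw d y 4 - (1,0) - hstar d)" using roots[OF d hstar_inH[OF d]] by blast
  note hs = hstar_odd[OF d u]
  have c: "inH d (G + pm d u (hstar d))" using inH_coset[OF G hs[THEN conjunct1] False hs[THEN conjunct2]] .
  have "pdv 9 (pm d u (pw d y 4 - (1,0) - hstar d))" using pdv_mul_right[OF de y(2)] .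
  then have "pdv 9 ((G + pm d u (pw d y 4 - (1,0))) - (G + pm d u (hstar d)))"
    by (simp add: pm_diff_right pm_add_right algebra_simps)
  then show ?thesis using inH_cong c y(1) by blast
qed


lemma three_subset: assumes "odd (p::int)" "odd q" "odd r"
  shows "\<exists>c1 c2 c3. c1 \<in> {0,1} \<and> c2 \<in> {0,1} \<and> c3 \<in> {0,1} \<and> 4 dvd t + c1 * p + c2 * q + c3 * r"
proof -
  have "4 dvd t \<or> 4 dvd t + p \<or> 4 dvd t + q \<or> 4 dvd t + r \<or> 4 dvd t + p + q \<or> 4 dvd t + p + r
    \<or> 4 dvd t + q + r \<or> 4 dvd t + p + q + r" using assms by presburger
  then show ?thesis
    apply (elim disjE)
    apply (rule exI[of _ 0], rule exI[of _ 0], rule exI[of _ 0], simp)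
    apply (rule exI[of _ 1], rule exI[of _ 0], rule exI[of _ 0], simp)
    apply (rule exI[of _ 0], rule exI[of _ 1], rule exI[of _ 0], simp)
    apply (rule exI[of _ 0], rule exI[of _ 0], rule exI[of _ 1], simp)
    apply (rule exI[of _ 1], rule exI[of _ 1], rule exI[of _ 0], simp)
    apply (rule exI[of _ 1], rule exI[of _ 0], rule exI[of _ 1], simp)
    apply (rule exI[of _ 0], rule exI[of _ 1], rule exI[of _ 1], simp add: add.assoc)
    apply (rule exI[of _ 1], rule exI[of _ 1], rule exI[of _ 1], simp)
    done
qed

definition ps :: "int \<Rightarrow> zp \<Rightarrow> int" where "ps \<kappa> x = fst x + 2 * \<kappa> * snd x"

lemma pw_pi_c: "c \<in> {0,1} \<Longrightarrow> pw d (0, c) 4 = (c * d * d, 0)"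
  by (auto simp: pw4 pm_def)
lemma pw_eps: "c \<in> {0,1} \<Longrightarrow> pw d (c, 0) 4 = (c, 0)"
  by (auto simp: pw4 pm_def)

lemma choose:
  assumes \<kappa>: "\<kappa> \<in> {0,1}" and d: "D4 d" and S: "4 dvd ps \<kappa> S" "even (snd S)" and V: "pex 3 V"
    and u: "odd (fst u5)" "odd (fst u6)" "odd (fst u7)"
  shows "\<exists>\<epsilon> c5 c6 c7. \<epsilon> \<in> {0,1} \<and> c5 \<in> {0,1} \<and> c6 \<in> {0,1} \<and> c7 \<in> {0,1} \<and>
     16 dvd ps \<kappa> (S + pm d V (\<epsilon>, 0) + pm d u5 (c5*d*d, 0) + pm d u6 (c6*d*d, 0) + pm d u7 (c7*d*d, 0))
   \<and> 4 dvd snd (S + pm d V (\<epsilon>, 0) + pm d u5 (c5*d*d, 0) + pm d u6 (c6*d*d, 0) + pm d u7 (c7*d*d, 0))"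
proof -
  obtain e where e: "d = 2 * e" "odd e" using d_half[OF D4_mod4[OF d]] by blast
  define E where "E = e * e"
  have dd: "d * d = 4 * E" using e by (simp add: E_def)
  have oE: "odd E" using e by (simp add: E_def)
  obtain v1 v2 where v: "V = (v1, v2)" by (cases V)
  have vv: "4 dvd v1" "2 dvd v2" "\<not> 4 dvd v2"
    using V v by (auto simp: pex_def pdv_def)
  define \<epsilon> :: int where "\<epsilon> = (if 4 dvd snd S then 0 else 1)"
  have eps: "\<epsilon> \<in> {0,1}" by (simp add: \<epsilon>_def)
  have snd4: "4 dvd snd S + \<epsilon> * v2" using S(2) vv unfolding \<epsilon>_def by (cases "4 dvd snd S") (simp_all, presburger)
  have psV: "4 dvd v1 + 2 * \<kappa> * v2" using vv \<kappa> by auto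
  have "4 dvd ps \<kappa> S + \<epsilon> * (v1 + 2 * \<kappa> * v2)" using S(1) psV by simp
  then obtain t where t: "ps \<kappa> S + \<epsilon> * (v1 + 2 * \<kappa> * v2) = 4 * t" by blast
  have op: "odd (E * ps \<kappa> u5)" "odd (E * ps \<kappa> u6)" "odd (E * ps \<kappa> u7)"
    using oE u by (simp_all add: ps_def)
  obtain c5 c6 c7 where c: "c5 \<in> {0,1}" "c6 \<in> {0,1}" "c7 \<in> {0,1}"
    "4 dvd t + c5 * (E * ps \<kappa> u5) + c6 * (E * ps \<kappa> u6) + c7 * (E * ps \<kappa> u7)"
    using three_subset[OF op, of t] by blast
  define G where "G = S + pm d V (\<epsilon>, 0) + pm d u5 (c5*d*d, 0) + pm d u6 (c6*d*d, 0) + pm d u7 (c7*d*d, 0)"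
  have "ps \<kappa> G = 4 * (t + c5 * (E * ps \<kappa> u5) + c6 * (E * ps \<kappa> u6) + c7 * (E * ps \<kappa> u7))"
  proof -
    have "ps \<kappa> G = ps \<kappa> S + \<epsilon> * (v1 + 2 * \<kappa> * v2) + (d * d) * (c5 * ps \<kappa> u5 + c6 * ps \<kappa> u6 + c7 * ps \<kappa> u7)"
      unfolding G_def v by (simp add: ps_def algebra_simps)
    also have "\<dots> = 4 * (t + c5 * (E * ps \<kappa> u5) + c6 * (E * ps \<kappa> u6) + c7 * (E * ps \<kappa> u7))"
      unfolding t dd by (simp add: algebra_simps)
    finally show ?thesis .
  qed
  then have g1: "16 dvd ps \<kappa> G" using c(4) by (metis mult_dvd_mono dvd_refl numeral_times_numeral semiring_norm(12) semiring_norm(13) semiring_norm(14))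
  have "snd G = (snd S + \<epsilon> * v2) + (d * d) * (c5 * snd u5 + c6 * snd u6 + c7 * snd u7)"
    unfolding G_def v by (simp add: algebra_simps)
  then have "snd G = (snd S + \<epsilon> * v2) + 4 * (E * (c5 * snd u5 + c6 * snd u6 + c7 * snd u7))"
    unfolding dd by simp
  then have g2: "4 dvd snd G" using snd4 by simp
  show ?thesis using eps c g1 g2 unfolding G_def by blast
qed


abbreviation F8 where
  "F8 d u1 u2 u3 u4 u5 u6 u7 V y1 y2 y3 y4 y5 y6 y7 y8 \<equiv>
     pm d u1 (pw d y1 4) + pm d u2 (pw d y2 4) + pm d u3 (pw d y3 4) + pm d u4 (pw d y4 4)
   + pm d u5 (pw d y5 4) + pm d u6 (pw d y6 4) + pm d u7 (pw d y7 4) + pm d V (pw d y8 4)"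

lemma psi_ps: "psi d x = ps (if d mod 8 = 2 then 0 else 1) x"
  by (simp add: psi_def ps_def)

lemma caseII_even:
  assumes d: "D4 d" and u: "odd (fst u1)" "odd (fst u2)" "odd (fst u3)" "odd (fst u4)"
    "odd (fst u5)" "odd (fst u6)" "odd (fst u7)"
    and t: "even (snd u1)" "even (snd u2)" "even (snd u3)" "even (snd u4)"
    and S: "4 dvd fst (u1 + u2 + u3 + u4)" and V: "pex 3 V"
  shows "\<exists>y1 y2 y3 y4 y5 y6 y7 y8. pu y1 \<and> pdv 9 (F8 d u1 u2 u3 u4 u5 u6 u7 V y1 y2 y3 y4 y5 y6 y7 y8)"
proof -
  define \<kappa> :: int where "\<kappa> = (if d mod 8 = 2 then 0 else 1)"
  have k: "\<kappa> \<in> {0,1}" by (simp add: \<kappa>_def)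
  define S where "S = u1 + u2 + u3 + u4"
  have Se: "even (snd S)" using t by (simp add: S_def)
  have S4: "4 dvd ps \<kappa> S"
  proof -
    obtain m where m: "snd S = 2 * m" using Se by blast
    have "ps \<kappa> S = fst S + 4 * (\<kappa> * m)" by (simp add: ps_def m)
    moreover have "4 dvd fst S" using S by (simp add: S_def)
    ultimately show ?thesis by simp
  qed
  obtain \<epsilon> c5 c6 c7 where c: "\<epsilon> \<in> {0,1}" "c5 \<in> {0,1}" "c6 \<in> {0,1}" "c7 \<in> {0,1}"
    "16 dvd ps \<kappa> (S + pm d V (\<epsilon>, 0) + pm d u5 (c5*d*d, 0) + pm d u6 (c6*d*d, 0) + pm d u7 (c7*d*d, 0))"
    "4 dvd snd (S + pm d V (\<epsilon>, 0) + pm d u5 (c5*d*d, 0) + pm d u6 (c6*d*d, 0) + pm d u7 (c7*d*d, 0))"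
    using choose[OF k d S4 Se V u(5-7)] by blast
  define G where "G = S + pm d V (\<epsilon>, 0) + pm d u5 (c5*d*d, 0) + pm d u6 (c6*d*d, 0) + pm d u7 (c7*d*d, 0)"
  have g1: "16 dvd ps \<kappa> G" and g2: "4 dvd snd G" using c(5,6) unfolding G_def by auto
  have "8 dvd fst G"
  proof -
    obtain m where m: "snd G = 4 * m" using g2 by blast
    have "fst G = ps \<kappa> G - 8 * (\<kappa> * m)" using m by (simp add: ps_def)
    moreover have "8 dvd ps \<kappa> G" using g1 by (rule dvd_trans[rotated]) simp
    ultimately show ?thesis by simp
  qed
  then have GH: "inH d G" using g1 g2 by (simp add: inH_def pdv5_iff psi_ps \<kappa>_def)
  obtain y where y: "pu y" "pdv 9 (G + pm d u1 (pw d y 4 - (1,0)))"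
    using adjust_even[OF d u(1) t(1) GH] by blast
  have "F8 d u1 u2 u3 u4 u5 u6 u7 V y (1,0) (1,0) (1,0) (0,c5) (0,c6) (0,c7) (\<epsilon>,0) = G + pm d u1 (pw d y 4 - (1,0))"
    using c(1-4) by (simp add: pw_one pw_pi_c pw_eps G_def S_def pm_diff_right algebra_simps)
  then show ?thesis using y by metis
qed

lemma caseI:
  assumes d: "D4 d" and u: "odd (fst u1)" "odd (fst u2)" "odd (fst u3)" "odd (fst u4)"
    "odd (fst u5)" "odd (fst u6)" "odd (fst u7)"
    and t: "even (snd u1)" "odd (snd u3)" "even (snd (u1 + u2 + u3 + u4))"
    and S: "4 dvd fst (u1 + u2 + u3 + u4)" and V: "pex 3 V"
  shows "\<exists>y1 y2 y3 y4 y5 y6 y7 y8. pu y1 \<and> pdv 9 (F8 d u1 u2 u3 u4 u5 u6 u7 V y1 y2 y3 y4 y5 y6 y7 y8)"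
proof -
  define S where "S = u1 + u2 + u3 + u4"
  have S4: "4 dvd ps 0 S" using S by (simp add: ps_def S_def)
  obtain \<epsilon> c5 c6 c7 where c: "\<epsilon> \<in> {0,1}" "c5 \<in> {0,1}" "c6 \<in> {0,1}" "c7 \<in> {0,1}"
    "16 dvd ps 0 (S + pm d V (\<epsilon>, 0) + pm d u5 (c5*d*d, 0) + pm d u6 (c6*d*d, 0) + pm d u7 (c7*d*d, 0))"
    "4 dvd snd (S + pm d V (\<epsilon>, 0) + pm d u5 (c5*d*d, 0) + pm d u6 (c6*d*d, 0) + pm d u7 (c7*d*d, 0))"
    using choose[of 0, OF _ d S4 _ V u(5-7)] t(3) by (auto simp: S_def)
  define G where "G = S + pm d V (\<epsilon>, 0) + pm d u5 (c5*d*d, 0) + pm d u6 (c6*d*d, 0) + pm d u7 (c7*d*d, 0)"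
  have g1: "16 dvd fst G" and g2: "4 dvd snd G" using c(5,6) unfolding G_def ps_def by auto
  have "8 dvd fst G" using g1 by (rule dvd_trans[rotated]) simp
  then have G5: "pdv 5 G" using g2 by (simp add: pdv5_iff)
  obtain y3 where y3: "pu y3" "inH d (G + pm d u3 (pw d y3 4 - (1,0)))"
    using adjust_odd[OF d u(3) t(2) G5] by blast
  obtain y where y: "pu y" "pdv 9 ((G + pm d u3 (pw d y3 4 - (1,0))) + pm d u1 (pw d y 4 - (1,0)))"
    using adjust_even[OF d u(1) t(1) y3(2)] by blast
  have "F8 d u1 u2 u3 u4 u5 u6 u7 V y (1,0) y3 (1,0) (0,c5) (0,c6) (0,c7) (\<epsilon>,0)
      = (G + pm d u3 (pw d y3 4 - (1,0))) + pm d u1 (pw d y 4 - (1,0))"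
    using c(1-4) by (simp add: pw_one pw_pi_c pw_eps G_def S_def pm_diff_right algebra_simps)
  then show ?thesis using y by metis
qed

lemma caseII_odd:
  assumes d: "D4 d" and u: "odd (fst u1)" "odd (fst u2)" "odd (fst u3)" "odd (fst u4)"
    "odd (fst u5)" "odd (fst u6)" "odd (fst u7)"
    and t: "odd (snd u1)" "odd (snd u2)" "odd (snd u3)" "odd (snd u4)"
    and S: "4 dvd fst (u1 + u2 + u3 + u4)" "even (snd (u1 + u2 + u3 + u4))" and V: "pex 3 V"
  shows "\<exists>y1 y2 y3 y4 y5 y6 y7 y8. pu y1 \<and> pdv 9 (F8 d u1 u2 u3 u4 u5 u6 u7 V y1 y2 y3 y4 y5 y6 y7 y8)"
proof -
  have d4: "d mod 4 = 2" using D4_mod4[OF d] .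
  have de: "even d" using d4 by presburger
  define l :: zp where "l = (1, 1)"
  have l: "pex 0 l" using pu_pex[of l] by (simp add: l_def pu_def)
  have lu: "odd (fst (pm d l u))" if "odd (fst u)" for u using that de by (simp add: l_def)
  have lt: "even (snd (pm d l u))" if "odd (fst u)" "odd (snd u)" for u using that by (simp add: l_def)
  have S': "4 dvd fst (pm d l u1 + pm d l u2 + pm d l u3 + pm d l u4)"
  proof -
    have "fst (pm d l u1 + pm d l u2 + pm d l u3 + pm d l u4) = fst (u1 + u2 + u3 + u4) + d * snd (u1 + u2 + u3 + u4)"
      by (simp add: l_def algebra_simps)
    moreover have "4 dvd d * snd (u1 + u2 + u3 + u4)" using de S(2) by (metis mult_dvd_mono numeral_Bit0_eq_double mult_2 evenE)
    ultimately show ?thesis using S(1) by simp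
  qed
  have V': "pex 3 (pm d l V)" using pex_mul[OF d4 l V] by simp
  obtain y1 y2 y3 y4 y5 y6 y7 y8 where y: "pu y1"
    "pdv 9 (F8 d (pm d l u1) (pm d l u2) (pm d l u3) (pm d l u4) (pm d l u5) (pm d l u6) (pm d l u7) (pm d l V) y1 y2 y3 y4 y5 y6 y7 y8)"
    using caseII_even[OF d lu[OF u(1)] lu[OF u(2)] lu[OF u(3)] lu[OF u(4)] lu[OF u(5)] lu[OF u(6)] lu[OF u(7)]
      lt[OF u(1) t(1)] lt[OF u(2) t(2)] lt[OF u(3) t(3)] lt[OF u(4) t(4)] S' V'] by blast
  have "F8 d (pm d l u1) (pm d l u2) (pm d l u3) (pm d l u4) (pm d l u5) (pm d l u6) (pm d l u7) (pm d l V) y1 y2 y3 y4 y5 y6 y7 y8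
    = pm d l (F8 d u1 u2 u3 u4 u5 u6 u7 V y1 y2 y3 y4 y5 y6 y7 y8)"
    by (simp add: pm_add_right pm_assoc)
  then have "pdv (0 + 9) (pm d l (F8 d u1 u2 u3 u4 u5 u6 u7 V y1 y2 y3 y4 y5 y6 y7 y8))" using y(2) by simp
  then have "pdv 9 (F8 d u1 u2 u3 u4 u5 u6 u7 V y1 y2 y3 y4 y5 y6 y7 y8)" by (rule pdv_cancel[OF d4 l])
  then show ?thesis using y(1) by blast
qed


lemma assemble:
  assumes dist: "distinct [i1, i2, i3, i4, i5, i6, i7]" and I: "I = {i1, i2, i3, i4, i5, i6, i7}"
    and h: "pu y1" "pdv 9 (F8 d (u i1) (u i2) (u i3) (u i4) (u i5) (u i6) (u i7) V y1 y2 y3 y4 y5 y6 y7 y8)"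
  shows "\<exists>y y8. \<exists>i0\<in>I. pu (y i0) \<and> pdv 9 ((\<Sum>k\<in>I. pm d (u k) (pw d (y k) 4)) + pm d V (pw d y8 4))"
proof -
  define y where "y m = (if m = i1 then y1 else if m = i2 then y2 else if m = i3 then y3 else if m = i4 then y4
     else if m = i5 then y5 else if m = i6 then y6 else y7)" for m
  have ne: "i1 \<noteq> i2" "i1 \<noteq> i3" "i1 \<noteq> i4" "i1 \<noteq> i5" "i1 \<noteq> i6" "i1 \<noteq> i7" "i2 \<noteq> i3" "i2 \<noteq> i4" "i2 \<noteq> i5" "i2 \<noteq> i6" "i2 \<noteq> i7" "i3 \<noteq> i4" "i3 \<noteq> i5" "i3 \<noteq> i6" "i3 \<noteq> i7" "i4 \<noteq> i5" "i4 \<noteq> i6" "i4 \<noteq> i7" "i5 \<noteq> i6" "i5 \<noteq> i7" "i6 \<noteq> i7" using dist by auto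
  define g where "g k = pm d (u k) (pw d (y k) 4)" for k
  have sm: "(\<Sum>k\<in>I. g k) = g i1 + g i2 + g i3 + g i4 + g i5 + g i6 + g i7"
    unfolding I using ne by (simp add: add.assoc)
  have yv: "y i1 = y1" "y i2 = y2" "y i3 = y3" "y i4 = y4" "y i5 = y5" "y i6 = y6" "y i7 = y7"
    using ne by (simp_all add: y_def)
  have "(\<Sum>k\<in>I. pm d (u k) (pw d (y k) 4)) + pm d V (pw d y8 4)
     = F8 d (u i1) (u i2) (u i3) (u i4) (u i5) (u i6) (u i7) V y1 y2 y3 y4 y5 y6 y7 y8"
    using sm unfolding g_def yv by simp
  moreover have "i1 \<in> I" "y i1 = y1" using I by (auto simp: y_def)
  ultimately show ?thesis using h by metis
qed

lemma pigeon: assumes "finite A" "card A > 4" "\<forall>k\<in>A. cl k \<in> ({1,3} \<times> {0,1} :: (int \<times> int) set)"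
  shows "\<exists>i\<in>A. \<exists>j\<in>A. i \<noteq> j \<and> cl i = cl j"
proof (rule ccontr)
  assume "\<not> ?thesis"
  then have "inj_on cl A" by (auto simp: inj_on_def)
  then have "card (cl ` A) = card A" by (rule card_image)
  moreover have "card (cl ` A) \<le> card ({1,3} \<times> {0,1} :: (int \<times> int) set)"
    by (rule card_mono) (use assms(3) in auto)
  moreover have "card ({1,3} \<times> {0,1} :: (int \<times> int) set) = 4" by simp
  ultimately show False using assms(2) by simp
qed

lemma comb: assumes d: "D4 d" and fI: "finite I" and cI: "card I = 7" and u: "\<forall>k\<in>I. pu (u k)" and V: "pex 3 V"
  shows "\<exists>y y8. \<exists>i0\<in>I. pu (y i0) \<and> pdv 9 ((\<Sum>k\<in>I. pm d (u k) (pw d (y k) 4)) + pm d V (pw d y8 4))"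
proof -
  define cl where "cl k = (fst (u k) mod 4, snd (u k) mod 2)" for k
  have clr: "\<forall>k\<in>I. cl k \<in> ({1,3} \<times> {0,1} :: (int \<times> int) set)"
  proof
    fix k assume "k \<in> I"
    then have "odd (fst (u k))" using u by (simp add: pu_def)
    then have "fst (u k) mod 4 = 1 \<or> fst (u k) mod 4 = 3" by presburger
    moreover have "snd (u k) mod 2 = 0 \<or> snd (u k) mod 2 = 1" by presburger
    ultimately show "cl k \<in> {1,3} \<times> {0,1}" by (auto simp: cl_def)
  qed
  obtain i j where ij: "i \<in> I" "j \<in> I" "i \<noteq> j" "cl i = cl j" using pigeon[OF fI _ clr] cI by auto
  define I' where "I' = I - {i, j}"
  have cI': "card I' = 5" using cI ij fI by (simp add: I'_def card_Diff_subset)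
  obtain k l where kl: "k \<in> I'" "l \<in> I'" "k \<noteq> l" "cl k = cl l"
    using pigeon[OF _ _ , of I' cl] cI' clr fI unfolding I'_def by auto
  define R where "R = I - {i, j, k, l}"
  have c4: "card {i, j, k, l} = 4" using ij kl unfolding I'_def by auto
  have sub: "{i, j, k, l} \<subseteq> I" using ij kl unfolding I'_def by auto
  have "card R = 3" unfolding R_def using card_Diff_subset[OF finite_subset[OF sub fI] sub] c4 cI by simp
  then obtain p q r where R: "R = {p, q, r}" "p \<noteq> q" "q \<noteq> r" "p \<noteq> r" by (auto simp: card_3_iff)
  have I: "I = {i, j, k, l, p, q, r}" using R ij kl unfolding R_def I'_def by auto
  have dist: "distinct [i, j, k, l, p, q, r]" using R ij kl unfolding R_def I'_def by auto
  have memb: "i \<in> I" "j \<in> I" "k \<in> I" "l \<in> I" "p \<in> I" "q \<in> I" "r \<in> I" using I by auto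
  have o: "odd (fst (u m))" if "m \<in> I" for m using u that by (simp add: pu_def)
  have aij: "fst (u i) mod 4 = fst (u j) mod 4" "snd (u i) mod 2 = snd (u j) mod 2" using ij(4) by (auto simp: cl_def)
  have akl: "fst (u k) mod 4 = fst (u l) mod 4" "snd (u k) mod 2 = snd (u l) mod 2" using kl(4) by (auto simp: cl_def)
  have S4: "4 dvd fst (u i + u j + u k + u l)"
    using aij(1) akl(1) o[OF memb(1)] o[OF memb(2)] o[OF memb(3)] o[OF memb(4)] by simp presburger
  have S2: "even (snd (u i + u j + u k + u l))" using aij(2) akl(2) by simp presburger
  have S4': "4 dvd fst (u k + u l + u i + u j)" using S4 by (simp add: algebra_simps)
  have S2': "even (snd (u k + u l + u i + u j))" using S2 by (simp add: algebra_simps)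
  have bj: "even (snd (u j)) \<longleftrightarrow> even (snd (u i))" using aij(2) by presburger
  have bl: "even (snd (u l)) \<longleftrightarrow> even (snd (u k))" using akl(2) by presburger
  show ?thesis
  proof (cases "even (snd (u i))")
    case True note ti = this
    show ?thesis
    proof (cases "even (snd (u k))")
      case True
      then obtain y1 y2 y3 y4 y5 y6 y7 y8 where "pu y1"
        "pdv 9 (F8 d (u i) (u j) (u k) (u l) (u p) (u q) (u r) V y1 y2 y3 y4 y5 y6 y7 y8)"
        using caseII_even[OF d o[OF memb(1)] o[OF memb(2)] o[OF memb(3)] o[OF memb(4)] o[OF memb(5)]
          o[OF memb(6)] o[OF memb(7)] ti] bj bl S4 V ti True by blast
      then show ?thesis using assemble[OF dist I] by blast
    next
      case False
      then obtain y1 y2 y3 y4 y5 y6 y7 y8 where "pu y1"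
        "pdv 9 (F8 d (u i) (u j) (u k) (u l) (u p) (u q) (u r) V y1 y2 y3 y4 y5 y6 y7 y8)"
        using caseI[OF d o[OF memb(1)] o[OF memb(2)] o[OF memb(3)] o[OF memb(4)] o[OF memb(5)]
          o[OF memb(6)] o[OF memb(7)] ti _ S2 S4 V] by blast
      then show ?thesis using assemble[OF dist I] by blast
    qed
  next
    case False note ti = this
    show ?thesis
    proof (cases "even (snd (u k))")
      case True
      have dist': "distinct [k, l, i, j, p, q, r]" using dist by auto
      have I': "I = {k, l, i, j, p, q, r}" using I by auto
      obtain y1 y2 y3 y4 y5 y6 y7 y8 where "pu y1"
        "pdv 9 (F8 d (u k) (u l) (u i) (u j) (u p) (u q) (u r) V y1 y2 y3 y4 y5 y6 y7 y8)"
        using caseI[OF d o[OF memb(3)] o[OF memb(4)] o[OF memb(1)] o[OF memb(2)] o[OF memb(5)]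
          o[OF memb(6)] o[OF memb(7)] True _ S2' S4' V] ti by blast
      then show ?thesis using assemble[OF dist' I'] by blast
    next
      case False
      then obtain y1 y2 y3 y4 y5 y6 y7 y8 where "pu y1"
        "pdv 9 (F8 d (u i) (u j) (u k) (u l) (u p) (u q) (u r) V y1 y2 y3 y4 y5 y6 y7 y8)"
        using caseII_odd[OF d o[OF memb(1)] o[OF memb(2)] o[OF memb(3)] o[OF memb(4)] o[OF memb(5)]
          o[OF memb(6)] o[OF memb(7)] _ _ _ _ S4 S2 V] ti bj bl by blast
      then show ?thesis using assemble[OF dist I] by blast
    qed
  qed
qed


lemma pdv_scale_sum: "pm d (2^k, 0) x = (2^k * fst x, 2^k * snd x)" by (rule pm_pow2)

lemma dvd4_aux: fixes a C :: nat and j :: int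
  assumes "(int a - j) mod 4 = 0" "(int C - j) mod 4 = 0" "a \<le> C" shows "4 dvd C - a"
proof -
  have "int (C - a) = int C - int a" using assms(3) by simp
  then have "(4::int) dvd int (C - a)" using assms(1,2) by presburger
  then show ?thesis by presburger
qed

lemma C_mod: "(int (4 * M + nat (j mod 4)) - j) mod 4 = 0"
proof -
  have e: "int (4 * M + nat (j mod 4)) = 4 * int M + j mod 4" by simp
  have "(4 * int M + j mod 4 - j) mod 4 = 0" by presburger
  then show ?thesis using e by simp
qed

theorem core:
  assumes d: "D4 d" and fI: "finite I" and cI: "card I = 7" and sI: "s \<notin> I"
    and cA: "\<And>m. m \<in> insert s I \<Longrightarrow> coh (A m)"
    and ex: "\<And>m. m \<in> insert s I \<Longrightarrow> \<exists>n0. \<forall>n\<ge>n0. pex (c m) (A m n)"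
    and lev: "\<And>m. m \<in> I \<Longrightarrow> (int (c m) - j) mod 4 = 0" and levs: "(int (c s) - j - 3) mod 4 = 0"
  shows "\<exists>W. (\<forall>m. coh (W m)) \<and> (\<forall>m. m \<notin> insert s I \<longrightarrow> W m = (\<lambda>n. 0))
      \<and> (\<exists>m\<in>I. \<exists>n. \<not> pdv (2*n) (W m n))
      \<and> (\<forall>n. pdv (2*n) (\<Sum>m\<in>insert s I. pm d (A m n) (pw d (W m n) 4)))"
proof -
  define I8 where "I8 = insert s I"
  have fI8: "finite I8" using fI by (simp add: I8_def)
  have d4: "d mod 4 = 2" using D4_mod4[OF d] .
  have de: "even d" using d4 by presburger
  have "\<forall>m\<in>I8. \<exists>n0. \<forall>n\<ge>n0. pex (c m) (A m n)" using ex unfolding I8_def by blast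
  from bchoice[OF this] obtain nf where nf: "\<forall>m\<in>I8. \<forall>n\<ge>nf m. pex (c m) (A m n)" by blast
  define n0 where "n0 = (\<Sum>m\<in>I8. nf m)"
  have n0: "\<And>m n. m \<in> I8 \<Longrightarrow> n0 \<le> n \<Longrightarrow> pex (c m) (A m n)"
  proof -
    fix m n assume m: "m \<in> I8" and n: "n0 \<le> n"
    have "nf m \<le> n0" unfolding n0_def by (rule member_le_sum) (use m fI8 in auto)
    then show "pex (c m) (A m n)" using nf m n by simp
  qed
  define M where "M = (\<Sum>m\<in>I8. c m) + 1"
  have cM: "c m < 4 * M" if m: "m \<in> I8" for m
  proof -
    have "c m \<le> (\<Sum>m\<in>I8. c m)" by (rule member_le_sum) (use m fI8 in auto)
    then show ?thesis unfolding M_def by simp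
  qed
  define C where "C = 4 * M + nat (j mod 4)"
  define T where "T m = (if m = s then (C + 3 - c m) div 4 else (C - c m) div 4)" for m
  have CT: "\<And>m. m \<in> I \<Longrightarrow> c m + 4 * T m = C"
  proof -
    fix m assume m: "m \<in> I"
    have "m \<noteq> s" using m sI by auto
    have cm: "c m \<le> C" using cM[of m] m unfolding I8_def C_def by simp
    have "4 dvd (C - c m)" using dvd4_aux[OF lev[OF m] C_mod[of M j, folded C_def] cm] .
    then show "c m + 4 * T m = C" using \<open>m \<noteq> s\<close> cm unfolding T_def by simp
  qed
  have CTs: "c s + 4 * T s = C + 3"
  proof -
    have cm: "c s \<le> C + 3" using cM[of s] unfolding I8_def C_def by simp
    have l3: "(int (c s) - (j + 3)) mod 4 = 0" using levs by (simp add: algebra_simps)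
    have l4: "(int (C + 3) - (j + 3)) mod 4 = 0" using C_mod[of M j, folded C_def] by simp
    have "4 dvd (C + 3 - c s)" using dvd4_aux[OF l3 l4 cm] .
    then show ?thesis using cm unfolding T_def by simp
  qed
  define pi :: zp where "pi = (0, 1)"
  define B where "B m n = pm d (A m n) (pw d pi (4 * T m))" for m n
  have cB: "coh (B m)" if m: "m \<in> I8" for m
  proof -
    have "coh (A m)" using cA m unfolding I8_def by blast
    then show ?thesis unfolding B_def by (rule coh_pm[OF de _ coh_const])
  qed
  have exB: "pex (c m + 4 * T m) (B m n)" if m: "m \<in> I8" and n: "n0 \<le> n" for m n
    unfolding B_def pi_def using pex_mul[OF d4 n0[OF m n] pi_pex[OF d4]] .
  define n1 where "n1 = n0 + C + 9"
  define F where "F = pw d pi (3 * C)"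
  have F: "pex (3 * C) F" unfolding F_def pi_def using pi_pex[OF d4] .
  have uex: "\<forall>m\<in>I. \<exists>u. pu u \<and> pm d F (B m n1) = pm d (2^(2*C), 0) u"
  proof
    fix m assume m: "m \<in> I"
    have "pex (3 * C + C) (pm d F (B m n1))" using pex_mul[OF d4 F exB[of m n1]] CT[OF m] m n1_def I8_def by simp
    then have e: "pex (2 * (2 * C) + 0) (pm d F (B m n1))" by (simp add: algebra_simps)
    obtain u where u: "pm d F (B m n1) = (2^(2*C) * fst u, 2^(2*C) * snd u)"
      using pdv_factor[OF pex_pdv[OF e, THEN pdv_mono[of _ _ "2 * (2 * C)"]]] by auto
    have "pex (2*(2*C)+0) (2^(2*C) * fst u, 2^(2*C) * snd u)" using e u by simp
    then have "pex 0 u" by (simp only: pex_pow2)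
    then show "\<exists>u. pu u \<and> pm d F (B m n1) = pm d (2^(2*C), 0) u" using u
      by (intro exI[of _ u]) (simp add: pu_pex pm_pow2)
  qed
  from bchoice[OF this] obtain u where u0: "\<forall>m\<in>I. pu (u m) \<and> pm d F (B m n1) = pm d (2^(2*C), 0) (u m)"
    by blast
  have u: "\<And>m. m \<in> I \<Longrightarrow> pu (u m) \<and> pm d F (B m n1) = pm d (2^(2*C), 0) (u m)" using u0 by blast
  obtain V where V: "pex 3 V" "pm d F (B s n1) = pm d (2^(2*C), 0) V"
  proof -
    have "pex (3 * C + (C + 3)) (pm d F (B s n1))" using pex_mul[OF d4 F exB[of s n1]] CTs n1_def I8_def by simp
    then have e: "pex (2 * (2 * C) + 3) (pm d F (B s n1))" by (simp add: algebra_simps)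
    obtain v where v: "pm d F (B s n1) = (2^(2*C) * fst v, 2^(2*C) * snd v)"
      using pdv_factor[OF pex_pdv[OF e, THEN pdv_mono[of _ _ "2 * (2 * C)"]]] by auto
    have "pex (2*(2*C)+3) (2^(2*C) * fst v, 2^(2*C) * snd v)" using e v by simp
    then have "pex 3 v" by (simp only: pex_pow2)
    moreover have "pm d F (B s n1) = pm d (2^(2*C), 0) v" using v by (simp add: pm_pow2)
    ultimately show ?thesis using that by blast
  qed
  obtain y y8 i0 where y: "i0 \<in> I" "pu (y i0)" "pdv 9 ((\<Sum>k\<in>I. pm d (u k) (pw d (y k) 4)) + pm d V (pw d y8 4))"
    using comb[OF d fI cI _ V(1), of u] u by blast
  define yy where "yy m = (if m = s then y8 else y m)" for m
  define Q where "Q n = (\<Sum>m\<in>I8. pm d (B m n) (pw d (yy m) 4))" for n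
  have Q1: "pdv (C + 9) (Q n1)"
  proof -
    have "pm d F (Q n1) = (\<Sum>m\<in>I8. pm d (pm d F (B m n1)) (pw d (yy m) 4))"
      unfolding Q_def by (simp add: pm_sum_right pm_assoc)
    also have "\<dots> = (\<Sum>m\<in>I. pm d (pm d (2^(2*C), 0) (u m)) (pw d (y m) 4)) + pm d (pm d (2^(2*C), 0) V) (pw d y8 4)"
      unfolding I8_def using fI sI u V(2) apply (simp add: yy_def add.commute)
      apply (rule sum.cong) using sI by auto
    also have "\<dots> = pm d (2^(2*C), 0) ((\<Sum>k\<in>I. pm d (u k) (pw d (y k) 4)) + pm d V (pw d y8 4))"
      by (simp add: pm_sum_right pm_add_right pm_assoc)
    finally have "pm d F (Q n1) = pm d (2^(2*C), 0) ((\<Sum>k\<in>I. pm d (u k) (pw d (y k) 4)) + pm d V (pw d y8 4))" .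
    moreover have "pdv (2 * (2 * C) + 9) (pm d (2^(2*C), 0) ((\<Sum>k\<in>I. pm d (u k) (pw d (y k) 4)) + pm d V (pw d y8 4)))"
      unfolding pm_pow2 pdv_pow2 using y(3) .
    ultimately have "pdv (2 * (2 * C) + 9) (pm d F (Q n1))" by simp
    then have "pdv (3 * C + (C + 9)) (pm d F (Q n1))" by (simp add: algebra_simps)
    then show ?thesis by (rule pdv_cancel[OF d4 F])
  qed
  have cQ: "coh Q" unfolding Q_def
  proof (rule coh_sum)
    fix m assume "m \<in> I8"
    then show "coh (\<lambda>n. pm d (B m n) (pw d (yy m) 4))" using cB coh_pm[OF de _ coh_const] by blast
  qed
  have Qn: "\<And>n. n1 \<le> n \<Longrightarrow> pdv (C + 9) (Q n)"
  proof -
    fix n assume n: "n1 \<le> n"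
    have "pdv (2 * n1) (Q n - Q n1)" using coh_le[OF cQ n] .
    moreover have "C + 9 \<le> 2 * n1" unfolding n1_def by simp
    ultimately have "pdv (C + 9) (Q n - Q n1)" by (rule pdv_mono)
    from pdv_add[OF this Q1] show "pdv (C + 9) (Q n)" by simp
  qed
  have i0: "i0 \<in> I8" "i0 \<noteq> s" using y(1) sI unfolding I8_def by auto
  define B' where "B' = B i0"
  define T' where "T' n = - (\<Sum>m\<in>I8 - {i0}. pm d (B m n) (pw d (yy m) 4))" for n
  have cB': "coh B'" unfolding B'_def using cB[OF i0(1)] .
  have cT': "coh T'" unfolding T'_def
  proof (rule coh_uminus, rule coh_sum)
    fix m assume "m \<in> I8 - {i0}"
    then show "coh (\<lambda>n. pm d (B m n) (pw d (yy m) 4))" using cB coh_pm[OF de _ coh_const] by blast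
  qed
  have exB': "pex C (B' n)" if "n0 \<le> n" for n
    using exB[OF i0(1) that] CT[OF y(1)] unfolding B'_def by simp
  have y0: "pu (yy i0)" using y(2) i0(2) by (simp add: yy_def)
  have h0: "pdv (C + 9) (pm d (B' n) (pw d (yy i0) 4) - T' n)" if n: "n1 \<le> n" for n
  proof -
    have "Q n = pm d (B i0 n) (pw d (yy i0) 4) + (\<Sum>m\<in>I8 - {i0}. pm d (B m n) (pw d (yy m) 4))"
      unfolding Q_def using sum.remove[OF fI8 i0(1)] by blast
    then have "pm d (B' n) (pw d (yy i0) 4) - T' n = Q n" unfolding B'_def T'_def by simp
    then show ?thesis using Qn[OF n] by simp
  qed
  have n0n1: "n0 \<le> n1" unfolding n1_def by simp
  obtain Y where Y: "coh Y" "\<forall>n. pmod n (Y n) = Y n" "\<forall>n. 1 \<le> n \<longrightarrow> pu (Y n)"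
    "\<forall>n. pdv (2*n) (pm d (B' n) (pw d (Y n) 4) - T' n)"
    using hensel_seq[OF d4 cB' cT' exB' y0 h0] by blast
  define W where "W m n = (if m = i0 then pm d (pw d pi (T i0)) (Y n)
      else if m \<in> I8 then pm d (pw d pi (T m)) (yy m) else 0)" for m n
  have cW: "\<forall>m. coh (W m)"
  proof
    fix m
    show "coh (W m)"
    proof (cases "m = i0")
      case True
      then show ?thesis unfolding W_def using coh_pm[OF de coh_const Y(1)] by simp
    next
      case False
      then show ?thesis unfolding W_def using coh_const by simp
    qed
  qed
  have W0: "\<forall>m. m \<notin> insert s I \<longrightarrow> W m = (\<lambda>n. 0)" using i0 unfolding W_def I8_def by auto
  have nt: "\<exists>m\<in>I. \<exists>n. \<not> pdv (2*n) (W m n)"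
  proof -
    define n where "n = Suc (T i0)"
    have "pu (Y n)" using Y(3) n_def by simp
    then have "pex (T i0 + 0) (W i0 n)" unfolding W_def pi_def
      using pex_mul[OF d4 pi_pex[OF d4] pu_pex[THEN iffD1]] by simp
    moreover have "T i0 + 0 < 2 * n" unfolding n_def by simp
    ultimately have "\<not> pdv (2*n) (W i0 n)" using pex_not by blast
    then show ?thesis using y(1) by blast
  qed
  have pwW: "pw d (pm d (pw d pi t) w) 4 = pm d (pw d pi (4 * t)) (pw d w 4)" for t w
    by (simp add: pw_pm pw_mult[symmetric] mult.commute)
  have eq: "pdv (2*n) (\<Sum>m\<in>insert s I. pm d (A m n) (pw d (W m n) 4))" for n
  proof -
    have t0: "pm d (A i0 n) (pw d (W i0 n) 4) = pm d (B' n) (pw d (Y n) 4)"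
      unfolding W_def B'_def B_def by (simp add: pwW pm_assoc)
    have t1: "pm d (A m n) (pw d (W m n) 4) = pm d (B m n) (pw d (yy m) 4)" if "m \<in> I8 - {i0}" for m
      using that unfolding W_def B_def by (simp add: pwW pm_assoc)
    have "(\<Sum>m\<in>I8. pm d (A m n) (pw d (W m n) 4))
      = pm d (A i0 n) (pw d (W i0 n) 4) + (\<Sum>m\<in>I8 - {i0}. pm d (A m n) (pw d (W m n) 4))"
      using sum.remove[OF fI8 i0(1)] by blast
    also have "\<dots> = pm d (B' n) (pw d (Y n) 4) - T' n" unfolding t0 T'_def using t1 by simp
    finally show ?thesis using Y(4) unfolding I8_def by simp
  qed
  show ?thesis using cW W0 nt eq by blast
qed


theorem mainTheorem9:
  fixes d :: int and a :: "nat \<Rightarrow> qk"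
  assumes hd: "d \<in> {2, 10, -2, -10}"
    and ha: "\<forall>i\<in>{1..11}. a i \<in> Kset \<and> a i \<noteq> K_zero"
    and htype: "of_type a {1..11} (\<lambda>i. [7, 0, 0, 1] ! i)"
  shows "\<exists>x :: nat \<Rightarrow> qk. (\<forall>i\<in>{1..11}. x i \<in> Kset) \<and> (\<exists>i\<in>{1..11}. x i \<noteq> K_zero)
           \<and> K_sum (\<lambda>i. K_mul d (a i) (K_pow d (x i) 4)) [1..<12] = K_zero"
proof -
  have d: "D4 d" using hd by (auto simp: D4_def)
  have d4: "d mod 4 = 2" using D4_mod4[OF d] .
  have de: "even d" using d4 by presburger
  define D where "D = (\<Sum>i\<in>{1..11::nat}. fst (fst (a i)) + fst (snd (a i)))"
  have bD: "bnd D (a i)" if i: "i \<in> {1..11}" for i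
  proof -
    have "fst (fst (a i)) + fst (snd (a i)) \<le> D" unfolding D_def
      by (rule member_le_sum) (use i in auto)
    moreover have "a i \<in> Kset" using ha i by blast
    ultimately show ?thesis by (cases "a i") (auto simp: bnd_def Kset_def)
  qed
  define N where "N = 44 * D"
  have DN: "D \<le> N" unfolding N_def by simp
  define A where "A m n = kv N (a m) n" for m n
  define c where "c m = nat (K_val (a m) + 2 * int N)" for m
  have cA: "coh (A m)" if "m \<in> {1..11}" for m unfolding A_def using kv_coh[OF bD[OF that] DN] .
  have exA: "\<exists>n0. \<forall>n\<ge>n0. pex (c m) (A m n)" if "m \<in> {1..11}" for m
    unfolding A_def c_def using K_val_lemma(2)[OF bD[OF that] _ DN] ha that by blast
  have cK: "int (c m) = K_val (a m) + 2 * int N" if "m \<in> {1..11}" for m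
    unfolding c_def using K_val_lemma(1)[OF bD[OF that] _ DN] ha that by simp
  obtain j where hj: "\<forall>i<4. card {m \<in> {1..11}. level a m = (int i + j) mod 4} \<ge> [7, 0, 0, 1] ! i"
    using htype unfolding of_type_def by blast
  have c0: "card {m \<in> {1..11::nat}. level a m = j mod 4} \<ge> 7" using hj[rule_format, of 0] by simp
  have c3: "card {m \<in> {1..11::nat}. level a m = (3 + j) mod 4} \<ge> 1" using hj[rule_format, of 3] by simp
  obtain I where I: "I \<subseteq> {m \<in> {1..11::nat}. level a m = j mod 4}" "card I = 7" "finite I"
    using obtain_subset_with_card_n[OF c0] by blast
  have ne: "{m \<in> {1..11::nat}. level a m = (3 + j) mod 4} \<noteq> {}"
  proof
    assume h: "{m \<in> {1..11::nat}. level a m = (3 + j) mod 4} = {}"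
    have "card {m \<in> {1..11::nat}. level a m = (3 + j) mod 4} = 0" by (simp only: h card.empty)
    then show False using c3 by linarith
  qed
  then obtain s where s: "s \<in> {m \<in> {1..11::nat}. level a m = (3 + j) mod 4}" by blast
  have sI: "s \<notin> I"
  proof
    assume "s \<in> I"
    then have "level a s = j mod 4" using I by auto
    moreover have "level a s = (3 + j) mod 4" using s by auto
    ultimately show False by presburger
  qed
  have I11: "insert s I \<subseteq> {1..11}" using I s by auto
  have lev: "(int (c m) - j) mod 4 = 0" if m: "m \<in> I" for m
  proof -
    have m11: "m \<in> {1..11}" using m I by auto
    have "K_val (a m) mod 4 = j mod 4" using m I by (auto simp: level_def)
    then show ?thesis unfolding cK[OF m11] N_def by presburger
  qed
  have levs: "(int (c s) - j - 3) mod 4 = 0"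
  proof -
    have "K_val (a s) mod 4 = (3 + j) mod 4" using s by (auto simp: level_def)
    then show ?thesis using s unfolding cK[OF I11[THEN subsetD, OF insertI1]] N_def by presburger
  qed
  obtain W where W: "\<forall>m. coh (W m)" "\<forall>m. m \<notin> insert s I \<longrightarrow> W m = (\<lambda>n. 0)"
    "\<exists>m\<in>I. \<exists>n. \<not> pdv (2*n) (W m n)" "\<forall>n. pdv (2*n) (\<Sum>m\<in>insert s I. pm d (A m n) (pw d (W m n) 4))"
    using core[OF d I(3) I(2) sI, of A c j] cA exA lev levs I11 by blast
  define X where "X m n = pmod n (W m n)" for m n
  have cX: "coh (X m)" for m unfolding X_def using coh_pmod W(1) by blast
  have rX: "pmod n (X m n) = X m n" for m n unfolding X_def by (simp add: pmod_pmod)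
  define x where "x m = emb (X m)" for m
  have bx: "bnd 0 (x m)" for m unfolding x_def using emb_lemma(1)[OF cX rX] .
  have kx: "kv 0 (x m) n = X m n" for m n unfolding x_def using emb_lemma(2)[OF cX rX] .
  have P1: "\<forall>i\<in>{1..11}. x i \<in> Kset" using bx bnd_Kset by blast
  have P2: "\<exists>i\<in>{1..11}. x i \<noteq> K_zero"
  proof -
    obtain m n where mn: "m \<in> I" "\<not> pdv (2*n) (W m n)" using W(3) by blast
    have "x m \<noteq> K_zero"
    proof
      assume "x m = K_zero"
      then have "X m n = 0" unfolding x_def by (rule emb_nonzero)
      then have "pdv (2*n) (0 - W m n)" using pmod_cong[of n "W m n"] unfolding X_def by simp
      then show False using mn(2) by (simp add: pdv_uminus)
    qed
    moreover have "m \<in> {1..11}" using mn(1) I(1) by auto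
    ultimately show ?thesis by blast
  qed
  define f where "f i = K_mul d (a i) (K_pow d (x i) 4)" for i
  have set12: "set [1..<12] = {1..11::nat}" by auto
  have bf: "bnd (2 * D) (f i)" if "i \<in> set [1..<12]" for i
    unfolding f_def using K_mul_lemma(1)[OF bD K_pow_lemma[OF bx de, THEN conjunct1]] that set12 by auto
  have bS: "bnd (11 * (2 * D)) (K_sum f [1..<12])" using K_sum_lemma(1)[of "[1..<12]" "2*D" f, OF bf] by simp
  have eS: "pdv (2*n) (kv N (K_sum f [1..<12]) n - (\<Sum>i\<leftarrow>[1..<12]. kv N (f i) n))" for n
    using K_sum_lemma(2)[of "[1..<12]" "2*D" f N n, OF bf] N_def by simp
  have fi: "pdv (2*n) (kv N (f i) n - pm d (A i n) (pw d (W i n) 4))" if i: "i \<in> {1..11}" for i n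
  proof -
    have a1: "pdv (2*n) (kv N (f i) n - pm d (kv N (a i) n) (kv 0 (K_pow d (x i) 4) n))"
      unfolding f_def using K_mul_lemma(2)[OF bD[OF i] K_pow_lemma[OF bx de, THEN conjunct1], of N n d] N_def by simp
    have a2: "pdv (2*n) (kv 0 (K_pow d (x i) 4) n - pw d (X i n) 4)"
      using K_pow_lemma[OF bx de, THEN conjunct2] kx by simp
    have a3: "pdv (2*n) (pw d (X i n) 4 - pw d (W i n) 4)"
      unfolding X_def using pdv_cong_pw[OF de pmod_cong] .
    have "pdv (2*n) (kv 0 (K_pow d (x i) 4) n - pw d (W i n) 4)" using pdv_trans[OF a2 a3] .
    then have "pdv (2*n) (pm d (kv N (a i) n) (kv 0 (K_pow d (x i) 4) n) - pm d (A i n) (pw d (W i n) 4))"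
      unfolding A_def using pdv_cong_mul[OF de, of "2*n" "kv N (a i) n" "kv N (a i) n"] by simp
    then show ?thesis using pdv_trans[OF a1] by blast
  qed
  have sumeq: "(\<Sum>i\<in>{1..11}. pm d (A i n) (pw d (W i n) 4)) = (\<Sum>m\<in>insert s I. pm d (A m n) (pw d (W m n) 4))" for n
  proof (rule sum.mono_neutral_right)
    show "finite {1..11::nat}" by simp
    show "insert s I \<subseteq> {1..11}" using I11 .
    show "\<forall>i\<in>{1..11} - insert s I. pm d (A i n) (pw d (W i n) 4) = 0" using W(2) by (simp add: pw4)
  qed
  have zero: "pdv (2*n) (kv N (K_sum f [1..<12]) n)" for n
  proof -
    have l: "(\<Sum>i\<leftarrow>[1..<12]. kv N (f i) n) = (\<Sum>i\<in>{1..11}. kv N (f i) n)"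
      using sum.distinct_set_conv_list[of "[1..<12]" "\<lambda>i. kv N (f i) n"] set12 by simp
    have b: "pdv (2*n) ((\<Sum>i\<in>{1..11}. kv N (f i) n) - (\<Sum>i\<in>{1..11}. pm d (A i n) (pw d (W i n) 4)))"
      by (rule pdv_cong_sum) (rule fi)
    have c: "pdv (2*n) (\<Sum>i\<in>{1..11}. pm d (A i n) (pw d (W i n) 4))" unfolding sumeq using W(4) by blast
    have a: "pdv (2*n) (kv N (K_sum f [1..<12]) n - (\<Sum>i\<in>{1..11}. kv N (f i) n))" using eS[of n] unfolding l .
    have "kv N (K_sum f [1..<12]) n = (kv N (K_sum f [1..<12]) n - (\<Sum>i\<in>{1..11}. kv N (f i) n))
       + ((\<Sum>i\<in>{1..11}. kv N (f i) n) - (\<Sum>i\<in>{1..11}. pm d (A i n) (pw d (W i n) 4)))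
       + (\<Sum>i\<in>{1..11}. pm d (A i n) (pw d (W i n) 4))" by simp
    then show ?thesis using pdv_add[OF pdv_add[OF a b] c] by simp
  qed
  have "K_sum f [1..<12] = K_zero"
    using K_zero_inj[OF bnd_mono[OF bS] zero] N_def by simp
  then show ?thesis using P1 P2 unfolding f_def by blast
qed


end
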